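(* Let $k_0\geq 2$ and let $(\mathscr{G}_{k_0}^{(n)})_{n\geq k_0}$ be a family of CNOT circuits such that each $\mathscr{G}_{k_0}^{(n)}$ is a clean special $k_0$-body generator on $n$ qubits. For $k>k_0$ and $n\geq k$ define recursively $$\mathscr{G}_k^{(n)}:=W_k^{(n)}\odot \mathrm{CX}_{n-k+1,n-k+2}\odot\overline{\mathrm{PTC}}^{(1,n-k+1)},$$ where $W_k^{(k)}:=\mathrm{CX}_{1,2}\odot\mathscr{G}_{k-1}^{(2,k)}$ and, for $n>k$, $W_k^{(n)}:=\mathrm{CX}_{1,2}\odot\mathscr{G}_{k-1}^{(2,n)}\odot\mathrm{SW}_{1,2}\odot W_k^{(2,n)}$. Then $\mathscr{G}_k^{(n)}$ is a clean special $k$-body generator for each $k\geq k_0$. Moreover, if $\operatorname{size}(\mathscr{G}_{k_0}^{(n)})=c_1n^{k_0-1}+\mathcal{O}(n^{k_0-2})$ and $D(\mathscr{G}_{k_0}^{(n)})=c_2n^{k_0-2}+\mathcal{O}(n^{k_0-3})$ for constants $c_1,c_2>0$, then for every $k\geq k_0$ $$\operatorname{size}(\mathscr{G}_k^{(n)})=c_1\frac{(k_0-1)!}{(k-1)!}n^{k-1}+\mathcal{O}(n^{k-2}),\qquad D(\mathscr{G}_k^{(n)})=c_2\frac{(k_0-2)!}{(k-2)!}n^{k-2}+\mathcal{O}(n^{k-3}).$$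
   Context: Qubits are indexed $1,\ldots,n$; $\mathrm{CX}_{i,j}$ ($i\neq j$) is the CNOT gate with control $i$, target $j$. A CNOT circuit is a finite sequence of moments, each a set of CNOT gates on pairwise disjoint qubits; $D(C)$ is the number of moments and $\operatorname{size}(C)$ the number of gates. A single gate also denotes the one-moment circuit containing it. $C_1\odot C_2$ is the circuit consisting of the moments of $C_1$ followed by those of $C_2$. If $C^{(m)}$ is a circuit on qubits $1,\ldots,m$, then for $q-p+1=m$, $C^{(p,q)}$ is the circuit obtained by replacing every gate $\mathrm{CX}_{i,j}$ by $\mathrm{CX}_{i+p-1,j+p-1}$; $\overline{C}^{(p,q)}$ is the circuit obtained from $C^{(p,q)}$ (same moments) by replacing every gate $\mathrm{CX}_{i,j}$ by $\mathrm{CX}_{p+q-i,p+q-j}$. $\mathrm{DX}_{c,t}:=\mathrm{CX}_{t,c}\odot\mathrm{CX}_{c,t}$, $\mathrm{SW}_{c,t}:=\mathrm{CX}_{c,t}\odot\mathrm{CX}_{t,c}\odot\mathrm{CX}_{c,t}$, and the Parity Twine chain is $\mathrm{PTC}^{(m)}:=\mathrm{DX}_{1,2}\odot\mathrm{DX}_{2,3}\odot\cdots\odot\mathrm{DX}_{m-1,m}$ ($\mathrm{PTC}^{(1)}$ is empty). A label is a subset of $\{1,\ldots,n\}$; $ab$ is the symmetric difference of labels $a,b$. A label sequence $\ell=(\ell_1,\ldots,\ell_n)$ is acted on from the right: $\ell\,\mathrm{CX}_{i,j}$ replaces $\ell_j$ by $\ell_i\ell_j$; a moment applies its gates, a circuit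 its moments in order. With $C_{1,m}$ the first $m$ moments, $C$ generates a label $\lambda$ from $\ell$ if $\lambda$ is an entry of $\ell C_{1,m}$ for some $m\in\{1,\ldots,D(C)\}$. A CNOT circuit $C$ on $n\geq k$ qubits is a clean special $k$-body generator if, with $\ell^0=(\{1\},\ldots,\{n\})$: (i) $C$ generates from $\ell^0$ every label $\{1,i_1,\ldots,i_{k-1}\}$ with $1<i_1<\cdots<i_{k-1}\leq n$; and (ii) there is a permutation $\pi$ of $\{1,\ldots,n\}$ with $\pi(1)=1$ such that $\ell^0C=(\{\pi(1)\},\ldots,\{\pi(n)\})$. *)

theory Defs
  imports Main "HOL-Library.Landau_Symbols"
begin

(* A gate (i,j) is CX_{i,j}: control i, target j.  A moment is a set of gates,
   a circuit is a list of moments (first moment first). *)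
type_synonym gate = "nat \<times> nat"
type_synonym moment = "gate set"
type_synonym circuit = "moment list"

definition valid_moment :: "nat \<Rightarrow> moment \<Rightarrow> bool" where
  "valid_moment n M \<longleftrightarrow>
     (\<forall>(i,j)\<in>M. i \<noteq> j \<and> 1 \<le> i \<and> i \<le> n \<and> 1 \<le> j \<and> j \<le> n) \<and>
     (\<forall>g\<in>M. \<forall>h\<in>M. g \<noteq> h \<longrightarrow> {fst g, snd g} \<inter> {fst h, snd h} = {})"

definition valid_circuit :: "nat \<Rightarrow> circuit \<Rightarrow> bool" where
  "valid_circuit n C \<longleftrightarrow> (\<forall>M\<in>set C. valid_moment n M)"

definition depth :: "circuit \<Rightarrow> nat" where
  "depth C = length C"

definition csize :: "circuit \<Rightarrow> nat" where
  "csize C = (\<Sum>M\<leftarrow>C. card M)"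

definition CX :: "nat \<Rightarrow> nat \<Rightarrow> circuit" where
  "CX i j = [{(i,j)}]"

definition DX :: "nat \<Rightarrow> nat \<Rightarrow> circuit" where
  "DX c t = CX t c @ CX c t"

definition SW :: "nat \<Rightarrow> nat \<Rightarrow> circuit" where
  "SW c t = CX c t @ CX t c @ CX c t"

definition PTC :: "nat \<Rightarrow> circuit" where
  "PTC m = concat (map (\<lambda>i. DX i (i+1)) [1..<m])"

definition shift :: "nat \<Rightarrow> circuit \<Rightarrow> circuit" where
  "shift p C = map (\<lambda>M. (\<lambda>(i,j). (i + p - 1, j + p - 1)) ` M) C"

definition mirror :: "nat \<Rightarrow> nat \<Rightarrow> circuit \<Rightarrow> circuit" where
  "mirror p q C = map (\<lambda>M. (\<lambda>(i,j). (p + q - i, p + q - j)) ` M) (shift p C)"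

type_synonym label = "nat set"
type_synonym labelseq = "nat \<Rightarrow> label"

definition symd :: "label \<Rightarrow> label \<Rightarrow> label" where
  "symd a b = (a - b) \<union> (b - a)"

definition apply_moment :: "labelseq \<Rightarrow> moment \<Rightarrow> labelseq" where
  "apply_moment l M = (\<lambda>j. if \<exists>i. (i,j) \<in> M then symd (l (THE i. (i,j) \<in> M)) (l j) else l j)"

definition apply_circuit :: "labelseq \<Rightarrow> circuit \<Rightarrow> labelseq" where
  "apply_circuit l C = foldl apply_moment l C"

definition l0 :: labelseq where
  "l0 = (\<lambda>i. {i})"

definition generates :: "nat \<Rightarrow> circuit \<Rightarrow> labelseq \<Rightarrow> label \<Rightarrow> bool" where
  "generates n C l lam \<longleftrightarrow>
     (\<exists>m\<in>{1..depth C}. \<exists>i\<in>{1..n}. lam = apply_circuit l (take m C) i)"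

definition clean_special_gen :: "nat \<Rightarrow> nat \<Rightarrow> circuit \<Rightarrow> bool" where
  "clean_special_gen k n C \<longleftrightarrow>
     n \<ge> k \<and> valid_circuit n C \<and>
     (\<forall>S. S \<subseteq> {2..n} \<and> card S = k - 1 \<longrightarrow> generates n C l0 (insert 1 S)) \<and>
     (\<exists>\<pi>. bij_betw \<pi> {1..n} {1..n} \<and> \<pi> 1 = 1 \<and>
          (\<forall>i\<in>{1..n}. apply_circuit l0 C i = {\<pi> i}))"

(* W_k^{(n)} given Gp = (n \<mapsto> G_{k-1}^{(n)}) *)
function Wrec :: "(nat \<Rightarrow> circuit) \<Rightarrow> nat \<Rightarrow> nat \<Rightarrow> circuit" where
  "Wrec Gp k n =
     (if n \<le> k then CX 1 2 @ shift 2 (Gp (n - 1))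
      else CX 1 2 @ shift 2 (Gp (n - 1)) @ SW 1 2 @ shift 2 (Wrec Gp k (n - 1)))"
  by pat_completeness auto
termination by (relation "measure (\<lambda>(_,_,n). n)") auto

(* G_k^{(n)} built from the base family G0 = (n \<mapsto> G_{k0}^{(n)}) *)
fun Gk :: "nat \<Rightarrow> (nat \<Rightarrow> circuit) \<Rightarrow> nat \<Rightarrow> nat \<Rightarrow> circuit" where
  "Gk k0 G0 k =
     (if k \<le> k0 then G0
      else (\<lambda>n. Wrec (Gk k0 G0 (k - 1)) k n @ CX (n - k + 1) (n - k + 2)
                  @ mirror 1 (n - k + 1) (PTC (n - k + 1))))"

end

theory Submission
  imports Defs
begin


declare Wrec.simps[simp del] Gk.simps[simp del]

definition xs :: "labelseq \<Rightarrow> nat set \<Rightarrow> label" where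
  "xs l A = {x. odd (card {i\<in>A. x \<in> l i})}"

lemma xs_single[simp]: "xs l {i} = l i"
proof -
  have "{i'\<in>{i}. x \<in> l i'} = (if x \<in> l i then {i} else {})" for x by auto
  then show ?thesis unfolding xs_def by auto
qed

lemma symd_finite[simp]: "finite a \<Longrightarrow> finite b \<Longrightarrow> finite (symd a b)"
  unfolding symd_def by auto

lemma xs_symd:
  assumes "finite A" "finite B"
  shows "symd (xs l A) (xs l B) = xs l (symd A B)"
proof -
  have key: "odd (card {i\<in>A. x \<in> l i}) \<noteq> odd (card {i\<in>B. x \<in> l i})
      \<longleftrightarrow> odd (card {i\<in>symd A B. x \<in> l i})" for x
  proof -
    let ?FA = "{i\<in>A. x \<in> l i}" and ?FB = "{i\<in>B. x \<in> l i}"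
    let ?FS = "{i\<in>symd A B. x \<in> l i}" and ?FI = "{i\<in>A \<inter> B. x \<in> l i}"
    have "card ?FA + card ?FB = card (?FA \<union> ?FB) + card (?FA \<inter> ?FB)"
      by (rule card_Un_Int) (use assms in auto)
    moreover have "?FA \<union> ?FB = ?FS \<union> ?FI" "?FA \<inter> ?FB = ?FI"
      unfolding symd_def by auto
    moreover have "card (?FS \<union> ?FI) = card ?FS + card ?FI"
      by (rule card_Un_disjoint) (use assms in \<open>auto simp: symd_def\<close>)
    ultimately have "card ?FA + card ?FB = card ?FS + 2 * card ?FI" by simp
    then show ?thesis by presburger
  qed
  have ms: "\<And>x a b. x \<in> symd a b \<longleftrightarrow> (x\<in>a) \<noteq> (x\<in>b)" by (auto simp: symd_def)
  show ?thesis
  proof (rule set_eqI)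
    fix x
    have "x \<in> symd (xs l A) (xs l B) \<longleftrightarrow> (x \<in> xs l A) \<noteq> (x \<in> xs l B)" by (rule ms)
    also have "\<dots> \<longleftrightarrow> x \<in> xs l (symd A B)" using key[of x] by (simp only: xs_def mem_Collect_eq)
    finally show "x \<in> symd (xs l A) (xs l B) \<longleftrightarrow> x \<in> xs l (symd A B)" .
  qed
qed

lemma xs_disj:
  assumes "finite A" "\<And>i j. i \<in> A \<Longrightarrow> j \<in> A \<Longrightarrow> i \<noteq> j \<Longrightarrow> l i \<inter> l j = {}"
  shows "xs l A = (\<Union>i\<in>A. l i)"
proof -
  have "odd (card {i\<in>A. x \<in> l i}) \<longleftrightarrow> (\<exists>i\<in>A. x \<in> l i)" for x
  proof (cases "\<exists>i\<in>A. x \<in> l i")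
    case True
    then obtain i where i: "i \<in> A" "x \<in> l i" by blast
    have "{i\<in>A. x \<in> l i} = {i}" using i assms(2) by blast
    then show ?thesis using i by auto
  next
    case False
    then have e: "{i\<in>A. x \<in> l i} = {}" by blast
    show ?thesis using False by (simp only: e) simp
  qed
  then show ?thesis unfolding xs_def by blast
qed

lemma apply_circuit_Nil[simp]: "apply_circuit l [] = l"
  by (simp add: apply_circuit_def)
lemma apply_circuit_Cons: "apply_circuit l (M # C) = apply_circuit (apply_moment l M) C"
  by (simp add: apply_circuit_def)
lemma apply_circuit_append: "apply_circuit l (A @ B) = apply_circuit (apply_circuit l A) B"
  by (simp add: apply_circuit_def)

lemma apply_moment_lin:
  assumes "\<And>j. finite (A j)"
  shows "apply_moment (\<lambda>j. xs l (A j)) M = (\<lambda>j. xs l (apply_moment A M j))"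
proof (rule ext)
  fix j show "apply_moment (\<lambda>j. xs l (A j)) M j = xs l (apply_moment A M j)"
    by (cases "\<exists>i. (i,j)\<in>M") (simp_all add: apply_moment_def xs_symd assms)
qed

lemma apply_moment_finite: "(\<And>j. finite (A j)) \<Longrightarrow> finite (apply_moment A M j)"
  unfolding apply_moment_def by auto

lemma apply_circuit_lin:
  assumes "\<And>j. finite (A j)"
  shows "apply_circuit (\<lambda>j. xs l (A j)) C = (\<lambda>j. xs l (apply_circuit A C j))"
  using assms
proof (induction C arbitrary: A)
  case Nil then show ?case by simp
next
  case (Cons M C)
  have "apply_circuit (\<lambda>j. xs l (A j)) (M # C) = apply_circuit (\<lambda>j. xs l (apply_moment A M j)) C"
    by (simp add: apply_circuit_Cons apply_moment_lin Cons.prems)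
  also have "\<dots> = (\<lambda>j. xs l (apply_circuit (apply_moment A M) C j))"
    by (rule Cons.IH) (simp add: apply_moment_finite Cons.prems)
  finally show ?case by (simp add: apply_circuit_Cons)
qed

lemma apply_circuit_xs: "apply_circuit l C j = xs l (apply_circuit l0 C j)"
proof -
  have "apply_circuit (\<lambda>j. xs l (l0 j)) C = (\<lambda>j. xs l (apply_circuit l0 C j))"
    by (rule apply_circuit_lin) (simp add: l0_def)
  moreover have "(\<lambda>j. xs l (l0 j)) = l" by (simp add: l0_def)
  ultimately show ?thesis by metis
qed

lemma apply_moment_single: "apply_moment l {(i,j)} = l(j := symd (l i) (l j))"
  unfolding apply_moment_def by (auto intro!: ext)

lemma apply_CX: "apply_circuit l (CX i j) = l(j := symd (l i) (l j))"
  by (simp add: CX_def apply_circuit_Cons apply_moment_single)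

lemma symd_self[simp]: "symd a a = {}" by (auto simp: symd_def)

lemma apply_SW: "a \<noteq> b \<Longrightarrow> apply_circuit l (SW a b) = l(a := l b, b := l a)"
  unfolding SW_def apply_circuit_append apply_CX
  by (auto intro!: ext simp: symd_def)



definition uniqc :: "moment \<Rightarrow> bool" where
  "uniqc M \<longleftrightarrow> (\<forall>a a' b. (a,b)\<in>M \<longrightarrow> (a',b)\<in>M \<longrightarrow> a = a')"

lemma vm_gate: assumes "valid_moment n M" "(i,j)\<in>M" shows "i\<noteq>j \<and> 1\<le>i \<and> i\<le>n \<and> 1\<le>j \<and> j\<le>n"
proof -
  have "\<forall>(i,j)\<in>M. i \<noteq> j \<and> 1 \<le> i \<and> i \<le> n \<and> 1 \<le> j \<and> j \<le> n"
    using assms(1) unfolding valid_moment_def by (rule conjunct1)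
  from bspec[OF this assms(2)] show ?thesis by simp
qed

lemma vm_disj: assumes "valid_moment n M" "g\<in>M" "h\<in>M" "g\<noteq>h"
  shows "{fst g, snd g} \<inter> {fst h, snd h} = {}"
proof -
  have "\<forall>g\<in>M. \<forall>h\<in>M. g \<noteq> h \<longrightarrow> {fst g, snd g} \<inter> {fst h, snd h} = {}"
    using assms(1) unfolding valid_moment_def by (rule conjunct2)
  then show ?thesis using assms(2-4) by blast
qed

lemma valid_uniqc: "valid_moment n M \<Longrightarrow> uniqc M"
  unfolding uniqc_def
proof (intro allI impI, rule ccontr)
  fix a a' b assume v: "valid_moment n M" and h: "(a,b)\<in>M" "(a',b)\<in>M" "a \<noteq> a'"
  then have "{fst (a,b), snd (a,b)} \<inter> {fst (a',b), snd (a',b)} = {}"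
    using vm_disj[OF v h(1) h(2)] by simp
  then show False by simp
qed

definition shiftM :: "nat \<Rightarrow> moment \<Rightarrow> moment" where
  "shiftM q M = (\<lambda>(i,j). (i+q, j+q)) ` M"

lemma shift_eq: "p \<ge> 1 \<Longrightarrow> shift p C = map (shiftM (p-1)) C"
  unfolding shift_def shiftM_def
  by (intro map_cong refl image_cong) auto

lemma apply_moment_shiftM:
  assumes "uniqc M"
  shows "apply_moment l (shiftM q M) =
    (\<lambda>j'. if j' < q then l j' else apply_moment (\<lambda>i. l (i+q)) M (j'-q))"
proof (rule ext)
  fix j'
  show "apply_moment l (shiftM q M) j' =
    (if j' < q then l j' else apply_moment (\<lambda>i. l (i+q)) M (j'-q))"
  proof (cases "j' < q")
    case True
    then have "\<not> (\<exists>i. (i,j') \<in> shiftM q M)" unfolding shiftM_def by auto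
    then show ?thesis using True by (simp add: apply_moment_def)
  next
    case False
    then obtain j where j: "j' = j + q" by (metis add.commute le_add_diff_inverse not_less)
    have mem: "(i', j') \<in> shiftM q M \<longleftrightarrow> (\<exists>i. i' = i + q \<and> (i,j) \<in> M)" for i'
      unfolding shiftM_def j by force
    show ?thesis
    proof (cases "\<exists>i. (i,j) \<in> M")
      case True
      then obtain i0 where i0: "(i0,j) \<in> M" by blast
      have t1: "(THE i. (i,j) \<in> M) = i0"
        using i0 assms unfolding uniqc_def by blast
      have t2: "(THE i'. (i',j') \<in> shiftM q M) = i0 + q"
        by (rule the_equality) (use i0 assms mem in \<open>auto simp: uniqc_def\<close>)
      have ex: "\<exists>i'. (i',j') \<in> shiftM q M" using mem i0 by blast
      have jq: "j' - q = j" using j by simp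
      show ?thesis using False ex True unfolding apply_moment_def jq t1 t2 by (simp add: j)
    next
      case nT: False
      then have "\<not> (\<exists>i'. (i',j') \<in> shiftM q M)" using mem by blast
      then show ?thesis using False nT unfolding apply_moment_def j by simp
    qed
  qed
qed

lemma apply_circuit_shiftM:
  assumes "\<forall>M\<in>set C. uniqc M"
  shows "apply_circuit l (map (shiftM q) C) =
    (\<lambda>j'. if j' < q then l j' else apply_circuit (\<lambda>i. l (i+q)) C (j'-q))"
  using assms
proof (induction C arbitrary: l)
  case Nil show ?case by (rule ext) simp
next
  case (Cons M C)
  let ?l' = "apply_moment l (shiftM q M)"
  have l': "?l' = (\<lambda>j'. if j' < q then l j' else apply_moment (\<lambda>i. l (i+q)) M (j'-q))"
    using Cons.prems by (simp add: apply_moment_shiftM)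
  have sh: "(\<lambda>i. ?l' (i+q)) = apply_moment (\<lambda>i. l (i+q)) M"
    unfolding l' by (auto intro!: ext)
  have "apply_circuit l (map (shiftM q) (M # C)) = apply_circuit ?l' (map (shiftM q) C)"
    by (simp add: apply_circuit_Cons)
  also have "\<dots> = (\<lambda>j'. if j' < q then ?l' j' else apply_circuit (\<lambda>i. ?l' (i+q)) C (j'-q))"
    using Cons by simp
  also have "\<dots> = (\<lambda>j'. if j' < q then l j' else apply_circuit (\<lambda>i. l (i+q)) (M # C) (j'-q))"
    unfolding sh by (auto intro!: ext simp: l' apply_circuit_Cons)
  finally show ?case .
qed

lemma valid_circuit_uniqc: "valid_circuit n C \<Longrightarrow> \<forall>M\<in>set C. uniqc M"
  unfolding valid_circuit_def using valid_uniqc by blast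

lemma apply_shift:
  assumes "valid_circuit m C" "p \<ge> 1"
  shows "apply_circuit l (shift p C) =
    (\<lambda>j'. if j' < p - 1 then l j' else apply_circuit (\<lambda>i. l (i+(p-1))) C (j'-(p-1)))"
  unfolding shift_eq[OF assms(2)]
  by (rule apply_circuit_shiftM[OF valid_circuit_uniqc[OF assms(1)]])

lemma apply_shift_in:
  assumes "valid_circuit m C" "p \<ge> 1" "j \<ge> 1"
  shows "apply_circuit l (shift p C) (j + (p-1)) = xs (\<lambda>i. l (i+(p-1))) (apply_circuit l0 C j)"
proof -
  have "apply_circuit l (shift p C) (j + (p-1)) = apply_circuit (\<lambda>i. l (i+(p-1))) C j"
    using apply_shift[OF assms(1,2), of l] by simp
  then show ?thesis by (rule trans[OF _ apply_circuit_xs])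
qed

lemma apply_shift_below:
  assumes "valid_circuit m C" "p \<ge> 1" "j < p - 1"
  shows "apply_circuit l (shift p C) j = l j"
  using apply_shift[OF assms(1,2), of l] assms(3) by simp

lemma apply_moment_untouched:
  assumes "valid_moment m M" "j = 0 \<or> j > m" shows "apply_moment l M j = l j"
proof -
  have "\<not>(\<exists>i. (i,j)\<in>M)" using vm_gate[OF assms(1)] assms(2) by fastforce
  then show ?thesis by (simp add: apply_moment_def)
qed

lemma apply_untouched:
  "valid_circuit m C \<Longrightarrow> j = 0 \<or> j > m \<Longrightarrow> apply_circuit l C j = l j"
proof (induction C arbitrary: l)
  case Nil then show ?case by simp
next
  case (Cons M C)
  then have "valid_moment m M" "valid_circuit m C" by (auto simp: valid_circuit_def)
  then show ?case using Cons
    by (simp add: apply_circuit_Cons apply_moment_untouched)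
qed

lemma valid_append[simp]: "valid_circuit n (A @ B) \<longleftrightarrow> valid_circuit n A \<and> valid_circuit n B"
  unfolding valid_circuit_def by auto

lemma valid_CX: "i \<noteq> j \<Longrightarrow> 1 \<le> i \<Longrightarrow> i \<le> n \<Longrightarrow> 1 \<le> j \<Longrightarrow> j \<le> n \<Longrightarrow> valid_circuit n (CX i j)"
proof -
  assume a: "i \<noteq> j" "1 \<le> i" "i \<le> n" "1 \<le> j" "j \<le> n"
  have "valid_moment n {(i,j)}" unfolding valid_moment_def
  proof (intro conjI ballI impI)
    fix g assume "g \<in> {(i,j)}"
    then show "case g of (i, j) \<Rightarrow> i \<noteq> j \<and> 1 \<le> i \<and> i \<le> n \<and> 1 \<le> j \<and> j \<le> n"
      using a by simp
  next
    fix g h assume "g \<in> {(i,j)}" "h \<in> {(i,j)}" "g \<noteq> h"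
    then show "{fst g, snd g} \<inter> {fst h, snd h} = {}" by simp
  qed
  then show ?thesis unfolding valid_circuit_def CX_def by simp
qed

lemma valid_SW: "i \<noteq> j \<Longrightarrow> 1 \<le> i \<Longrightarrow> i \<le> n \<Longrightarrow> 1 \<le> j \<Longrightarrow> j \<le> n \<Longrightarrow> valid_circuit n (SW i j)"
  unfolding SW_def by (simp add: valid_CX)

lemma valid_DX: "i \<noteq> j \<Longrightarrow> 1 \<le> i \<Longrightarrow> i \<le> n \<Longrightarrow> 1 \<le> j \<Longrightarrow> j \<le> n \<Longrightarrow> valid_circuit n (DX i j)"
  unfolding DX_def by (simp add: valid_CX)

lemma valid_moment_mono: "valid_moment m M \<Longrightarrow> m \<le> n \<Longrightarrow> valid_moment n M"
proof -
  assume a: "valid_moment m M" "m \<le> n"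
  show ?thesis unfolding valid_moment_def
  proof (intro conjI ballI impI)
    fix g assume "g \<in> M"
    then show "case g of (i, j) \<Rightarrow> i \<noteq> j \<and> 1 \<le> i \<and> i \<le> n \<and> 1 \<le> j \<and> j \<le> n"
      using vm_gate[OF a(1), of "fst g" "snd g"] a(2) by (cases g) simp
  next
    fix g h assume "g \<in> M" "h \<in> M" "g \<noteq> h"
    then show "{fst g, snd g} \<inter> {fst h, snd h} = {}" using vm_disj[OF a(1)] by blast
  qed
qed

lemma valid_mono: "valid_circuit m C \<Longrightarrow> m \<le> n \<Longrightarrow> valid_circuit n C"
  unfolding valid_circuit_def using valid_moment_mono by blast

lemma valid_shift:
  assumes "valid_circuit m C" "p \<ge> 1" "p + m - 1 \<le> n"
  shows "valid_circuit n (shift p C)"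
  unfolding valid_circuit_def shift_eq[OF assms(2)]
proof
  fix M' assume "M' \<in> set (map (shiftM (p-1)) C)"
  then obtain M where M: "M \<in> set C" "M' = shiftM (p-1) M" by auto
  then have vm: "valid_moment m M" using assms(1) unfolding valid_circuit_def by blast
  show "valid_moment n M'"
    unfolding valid_moment_def
  proof (intro conjI ballI impI)
    fix g assume "g \<in> M'"
    then obtain i j where "(i,j) \<in> M" "g = (i+(p-1), j+(p-1))" using M unfolding shiftM_def by auto
    moreover have "i \<noteq> j \<and> 1 \<le> i \<and> i \<le> m \<and> 1 \<le> j \<and> j \<le> m"
      using vm_gate[OF vm \<open>(i,j) \<in> M\<close>] .
    ultimately show "case g of (i, j) \<Rightarrow> i \<noteq> j \<and> 1 \<le> i \<and> i \<le> n \<and> 1 \<le> j \<and> j \<le> n"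
      using assms by auto
  next
    fix g h assume "g \<in> M'" "h \<in> M'" "g \<noteq> h"
    then obtain i j i2 j2 where ij: "(i,j) \<in> M" "g = (i+(p-1), j+(p-1))"
       "(i2,j2) \<in> M" "h = (i2+(p-1), j2+(p-1))" using M unfolding shiftM_def by auto
    then have "(i,j) \<noteq> (i2,j2)" using \<open>g \<noteq> h\<close> by auto
    then have "{fst (i,j), snd (i,j)} \<inter> {fst (i2,j2), snd (i2,j2)} = {}"
      using vm_disj[OF vm ij(1) ij(3)] by blast
    then show "{fst g, snd g} \<inter> {fst h, snd h} = {}"
      using ij by auto
  qed
qed

lemma valid_take: "valid_circuit n C \<Longrightarrow> valid_circuit n (take t C)"
  unfolding valid_circuit_def by (meson in_set_takeD)

lemma gen_prefix: 
  assumes "generates n C l S" shows "generates n (C @ D) l S"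
proof -
  obtain m i where m: "m \<in> {1..length C}" "i \<in> {1..n}" "S = apply_circuit l (take m C) i"
    using assms unfolding generates_def depth_def by blast
  have "take m (C @ D) = take m C" using m by simp
  moreover have "m \<in> {1..length (C @ D)}" using m by auto
  ultimately show ?thesis using m unfolding generates_def depth_def by metis
qed

lemma gen_suffix:
  assumes "generates n D (apply_circuit l C) S"
  shows "generates n (C @ D) l S"
proof -
  obtain m i where m: "m \<in> {1..length D}" "i \<in> {1..n}" "S = apply_circuit (apply_circuit l C) (take m D) i"
    using assms unfolding generates_def depth_def by blast
  have "take (length C + m) (C @ D) = C @ take m D" by simp
  then have "S = apply_circuit l (take (length C + m) (C @ D)) i"
    using m by (simp add: apply_circuit_append)
  moreover have "length C + m \<in> {1..length (C @ D)}" using m by auto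
  ultimately show ?thesis using m unfolding generates_def depth_def by blast
qed

lemma take_shift: "take t (shift p C) = shift p (take t C)"
  unfolding shift_def by (simp add: take_map)

lemma length_shift[simp]: "length (shift p C) = length C"
  unfolding shift_def by simp

lemma gen_shift:
  assumes "valid_circuit m C" "p \<ge> 1" "p + m - 1 \<le> n" "generates m C l0 A"
  shows "generates n (shift p C) l (xs (\<lambda>i. l (i+(p-1))) A)"
proof -
  obtain t i where t: "t \<in> {1..length C}" "i \<in> {1..m}" "A = apply_circuit l0 (take t C) i"
    using assms(4) unfolding generates_def depth_def by blast
  have "apply_circuit l (take t (shift p C)) (i + (p-1)) = xs (\<lambda>i. l (i+(p-1))) A"
    unfolding take_shift t(3) using t(2)
    by (intro apply_shift_in[OF valid_take[OF assms(1)] assms(2)]) simp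
  moreover have "i + (p-1) \<in> {1..n}" using t assms by auto
  moreover have "t \<in> {1..length (shift p C)}" using t by simp
  ultimately show ?thesis unfolding generates_def depth_def by metis
qed



lemma Wrec_base: "n \<le> k \<Longrightarrow> Wrec Gp k n = CX 1 2 @ shift 2 (Gp (n - 1))"
  by (subst Wrec.simps) simp

lemma Wrec_step: "n > k \<Longrightarrow> Wrec Gp k n =
   (CX 1 2 @ shift 2 (Gp (n - 1))) @ (SW 1 2 @ shift 2 (Wrec Gp k (n - 1)))"
  by (subst Wrec.simps) simp

lemma apply_shift_ge:
  assumes "valid_circuit m C" "p \<ge> 1" "j \<ge> p - 1"
  shows "apply_circuit l (shift p C) j = apply_circuit (\<lambda>i. l (i+(p-1))) C (j-(p-1))"
  using apply_shift[OF assms(1,2), of l] assms(3) by simp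

lemma perm_fix1:
  fixes \<pi> :: "nat \<Rightarrow> nat"
  assumes "bij_betw \<pi> {1..m} {1..m}" "\<pi> 1 = 1" "m \<ge> 1"
  shows "inj_on \<pi> {1..m}" "\<And>i. i \<in> {2..m} \<Longrightarrow> \<pi> i \<in> {2..m}" "\<pi> ` {2..m} = {2..m}"
proof -
  show inj: "inj_on \<pi> {1..m}" using assms(1) by (rule bij_betw_imp_inj_on)
  have im: "\<pi> ` {1..m} = {1..m}" using assms(1) by (rule bij_betw_imp_surj_on)
  have e: "{2..m} = {1..m} - {1}" by auto
  have "\<pi> ` ({1..m} - {1}) = \<pi> ` {1..m} - \<pi> ` {1}"
    by (rule inj_on_image_set_diff[OF inj]) (use assms(3) in auto)
  then show im2: "\<pi> ` {2..m} = {2..m}" unfolding e using im assms(2) by simp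
  show "\<And>i. i \<in> {2..m} \<Longrightarrow> \<pi> i \<in> {2..m}" using im2 by blast
qed

lemma clean_final:
  assumes "clean_special_gen k n C"
  obtains \<pi> where "bij_betw \<pi> {1..n} {1..n}" "\<pi> 1 = 1"
    "\<And>i. i \<in> {1..n} \<Longrightarrow> apply_circuit l0 C i = {\<pi> i}"
  using assms unfolding clean_special_gen_def by blast

lemma lab_shift2:
  assumes "valid_circuit m C" "j \<ge> 2" "j - 1 \<le> m"
  shows "apply_circuit l (shift 2 C) j = xs (\<lambda>i. l (i+1)) (apply_circuit l0 C (j-1))"
proof -
  have "apply_circuit l (shift 2 C) j = apply_circuit (\<lambda>i. l (i+1)) C (j-1)"
    using apply_shift_ge[OF assms(1), of 2 j l] assms by simp
  then show ?thesis by (rule trans[OF _ apply_circuit_xs])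
qed

lemma lab_shift2_1:
  assumes "valid_circuit m C"
  shows "apply_circuit l (shift 2 C) 1 = l 1"
proof -
  have "apply_circuit l (shift 2 C) 1 = apply_circuit (\<lambda>i. l (i+1)) C 0"
    using apply_shift_ge[OF assms(1), of 2 1 l] by simp
  also have "\<dots> = l 1" using apply_untouched[OF assms(1)] by simp
  finally show ?thesis .
qed

lemma lab_shift2_out:
  assumes "valid_circuit m C" "j > m + 1"
  shows "apply_circuit l (shift 2 C) j = l j"
proof -
  have "apply_circuit l (shift 2 C) j = apply_circuit (\<lambda>i. l (i+1)) C (j - 1)"
    using apply_shift_ge[OF assms(1), of 2 j l] assms by simp
  also have "\<dots> = (\<lambda>i. l (i+1)) (j - 1)" by (rule apply_untouched[OF assms(1)]) (use assms(2) in simp)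
  also have "\<dots> = l j" using assms(2) by simp
  finally show ?thesis .
qed

lemma l0_app[simp]: "l0 i = {i}" by (simp add: l0_def)

lemma clean_valid: "clean_special_gen k n C \<Longrightarrow> valid_circuit n C"
  unfolding clean_special_gen_def by blast

lemma clean_gen: "clean_special_gen k n C \<Longrightarrow> S \<subseteq> {2..n} \<Longrightarrow> card S = k - 1 \<Longrightarrow> generates n C l0 (insert 1 S)"
  unfolding clean_special_gen_def by blast

lemma partA:
  assumes G: "clean_special_gen (k-1) (n-1) G" and k: "k \<ge> 3" "n \<ge> k"
  shows "\<exists>\<pi>. bij_betw \<pi> {1..n-1} {1..n-1} \<and> \<pi> 1 = 1 \<and>
     valid_circuit n (CX 1 2 @ shift 2 G) \<and>
     (\<forall>j\<in>{1..n}. apply_circuit l0 (CX 1 2 @ shift 2 G) j =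
        (if j = 1 then {1} else if j = 2 then {1,2} else {\<pi> (j-1) + 1})) \<and>
     (\<forall>T. T \<subseteq> {2..n} \<and> 2 \<in> T \<and> card T = k - 1 \<longrightarrow> generates n (CX 1 2 @ shift 2 G) l0 (insert 1 T))"
proof -
  obtain \<pi> where pb: "bij_betw \<pi> {1..n-1} {1..n-1}" and p1: "\<pi> 1 = 1"
    and pf: "\<And>i. i \<in> {1..n-1} \<Longrightarrow> apply_circuit l0 G i = {\<pi> i}"
    using clean_final[OF G] by blast
  have pp: "inj_on \<pi> {1..n-1}" using perm_fix1[OF pb p1] k by simp
  have vG: "valid_circuit (n-1) G" using clean_valid[OF G] .
  define l1 where "l1 = l0(2 := {1,2})"
  have l1: "apply_circuit l0 (CX 1 2) = l1"
    unfolding l1_def apply_CX by (rule ext) (auto simp: symd_def)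
  have valid: "valid_circuit n (CX 1 2 @ shift 2 G)"
    using k by (auto intro!: valid_CX valid_shift[OF vG])
  have lab: "apply_circuit l0 (CX 1 2 @ shift 2 G) j =
        (if j = 1 then {1} else if j = 2 then {1,2} else {\<pi> (j-1) + 1})" if j: "j \<in> {1..n}" for j
  proof -
    have e: "apply_circuit l0 (CX 1 2 @ shift 2 G) j = apply_circuit l1 (shift 2 G) j"
      unfolding apply_circuit_append l1 by (rule refl)
    show ?thesis
    proof (cases "j = 1")
      case True then show ?thesis unfolding e using lab_shift2_1[OF vG] by (simp add: l1_def)
    next
      case False
      then have j2: "j \<ge> 2" "j - 1 \<le> n - 1" "j - 1 \<in> {1..n-1}" using j by auto
      have "apply_circuit l1 (shift 2 G) j = l1 (\<pi> (j-1) + 1)"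
        using lab_shift2[OF vG j2(1)] j2 pf[OF j2(3)] by simp
      moreover have "\<pi> (j-1) = 1 \<longleftrightarrow> j = 2"
      proof
        assume "\<pi> (j-1) = 1"
        then have "\<pi> (j-1) = \<pi> 1" using p1 by simp
        then have "j - 1 = 1" using inj_onD[OF pp] j2(3) k by auto
        then show "j = 2" using j2 by simp
      qed (use p1 in simp)
      moreover have "\<pi> (j-1) \<in> {1..n-1}" using bij_betwE[OF pb] j2(3) by blast
      ultimately show ?thesis unfolding e using False by (auto simp: l1_def)
    qed
  qed
  have gen: "generates n (CX 1 2 @ shift 2 G) l0 (insert 1 T)"
    if T: "T \<subseteq> {2..n}" "2 \<in> T" "card T = k - 1" for T
  proof -
    define S where "S = (\<lambda>x. x - 1) ` (T - {2})"
    have T3: "T - {2} \<subseteq> {3..n}" using T by auto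
    have inj: "inj_on (\<lambda>x. x - 1) (T - {2})"
      by (rule inj_onI) (use T3 in force)
    have fin: "finite T" using T(1) finite_subset by blast
    have cS: "card S = k - 1 - 1"
      unfolding S_def card_image[OF inj] using T fin by simp
    have Ssub: "S \<subseteq> {2..n-1}" unfolding S_def using T3 by force
    have g1: "generates (n-1) G l0 (insert 1 S)"
      by (rule clean_gen[OF G Ssub cS])
    have g2: "generates n (shift 2 G) l1 (xs (\<lambda>i. l1 (i+1)) (insert 1 S))"
      using gen_shift[OF vG _ _ g1, of 2 n l1] k by simp
    have SS: "(\<lambda>s. s + 1) ` S = T - {2}"
      unfolding S_def image_image using T3 by (force simp: image_iff)
    have "xs (\<lambda>i. l1 (i+1)) (insert 1 S) = (\<Union>i\<in>insert 1 S. l1 (i+1))"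
      by (rule xs_disj) (use Ssub fin S_def T3 in \<open>auto simp: l1_def\<close>)
    also have "\<dots> = insert 1 T"
    proof -
      have "(\<Union>i\<in>S. l1 (i+1)) = (\<Union>i\<in>S. {i+1})" using Ssub by (auto simp: l1_def)
      also have "\<dots> = T - {2}" using SS by auto
      finally show ?thesis using T(2) by (auto simp: l1_def)
    qed
    finally have "generates n (shift 2 G) l1 (insert 1 T)" using g2 by simp
    then show ?thesis using gen_suffix[of n "shift 2 G" l0 "CX 1 2"] l1 by simp
  qed
  show ?thesis using pb p1 valid lab gen by blast
qed



lemma W_inv:
  assumes k: "k \<ge> 3" and hG: "\<forall>m\<ge>k-1. clean_special_gen (k-1) m (Gp m)" and n: "k \<le> n"
  shows "valid_circuit n (Wrec Gp k n) \<and>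
    (\<forall>T. T \<subseteq> {2..n} \<and> card T = k-1 \<longrightarrow> generates n (Wrec Gp k n) l0 (insert 1 T)) \<and>
    (\<exists>\<tau>. inj_on \<tau> ({1..n}-{n-k+1}) \<and> \<tau> ` ({1..n}-{n-k+1}) \<subseteq> {2..n} \<and>
      (\<forall>i\<in>{1..n}. apply_circuit l0 (Wrec Gp k n) i =
         (if i = n-k+1 then {1} else if i \<le> n-k+2 then {1, \<tau> i} else {\<tau> i})))"
  using n
proof (induction n rule: dec_induct)
  case base
  have G: "clean_special_gen (k-1) (k-1) (Gp (k-1))" using hG by simp
  obtain \<pi> where pb: "bij_betw \<pi> {1..k-1} {1..k-1}" and p1: "\<pi> 1 = 1"
    and valid: "valid_circuit k (CX 1 2 @ shift 2 (Gp (k-1)))"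
    and lab: "\<forall>j\<in>{1..k}. apply_circuit l0 (CX 1 2 @ shift 2 (Gp (k-1))) j =
        (if j = 1 then {1} else if j = 2 then {1,2} else {\<pi> (j-1) + 1})"
    and gen: "\<forall>T. T \<subseteq> {2..k} \<and> 2 \<in> T \<and> card T = k - 1 \<longrightarrow>
        generates k (CX 1 2 @ shift 2 (Gp (k-1))) l0 (insert 1 T)"
    using partA[OF G k order_refl] by blast
  have W: "Wrec Gp k k = CX 1 2 @ shift 2 (Gp (k-1))" by (rule Wrec_base) simp
  have pinj: "inj_on \<pi> {1..k-1}" and pin: "\<And>i. i \<in> {2..k-1} \<Longrightarrow> \<pi> i \<in> {2..k-1}"
    using perm_fix1[OF pb p1] k by auto
  define \<tau> where "\<tau> j = (if j = 2 then 2 else \<pi> (j-1) + 1)" for j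
  have kk: "k - k + 1 = 1" "k - k + 2 = 2" by auto
  have inj: "inj_on \<tau> ({1..k} - {k-k+1})"
  proof (rule inj_onI)
    fix x y assume x: "x \<in> {1..k} - {k-k+1}" and y: "y \<in> {1..k} - {k-k+1}" and e: "\<tau> x = \<tau> y"
    show "x = y"
    proof (cases "x = 2 \<or> y = 2")
      case True
      have xi: "x \<noteq> 2 \<Longrightarrow> \<pi> (x - 1) \<in> {2..k-1}" using x by (intro pin) auto
      have yi: "y \<noteq> 2 \<Longrightarrow> \<pi> (y - 1) \<in> {2..k-1}" using y by (intro pin) auto
      show ?thesis using True e xi yi by (auto simp: \<tau>_def split: if_splits)
    next
      case False
      then have "\<pi> (x-1) = \<pi> (y-1)" using e by (simp add: \<tau>_def)
      moreover have "x - 1 \<in> {1..k-1}" "y - 1 \<in> {1..k-1}" using x y False by auto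
      ultimately have "x - 1 = y - 1" using inj_onD[OF pinj] by blast
      then show ?thesis using x y by auto
    qed
  qed
  have img: "\<tau> ` ({1..k} - {k-k+1}) \<subseteq> {2..k}"
  proof
    fix t assume "t \<in> \<tau> ` ({1..k} - {k-k+1})"
    then obtain x where x: "x \<in> {1..k} - {k-k+1}" "t = \<tau> x" by blast
    have "x \<noteq> 2 \<Longrightarrow> \<pi> (x - 1) \<in> {2..k-1}" using x by (intro pin) auto
    then show "t \<in> {2..k}" using x k by (auto simp: \<tau>_def)
  qed
  have labs: "\<forall>i\<in>{1..k}. apply_circuit l0 (Wrec Gp k k) i =
         (if i = k-k+1 then {1} else if i \<le> k-k+2 then {1, \<tau> i} else {\<tau> i})"
    unfolding W kk using lab by (auto simp: \<tau>_def)
  have gens: "\<forall>T. T \<subseteq> {2..k} \<and> card T = k-1 \<longrightarrow> generates k (Wrec Gp k k) l0 (insert 1 T)"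
  proof (intro allI impI)
    fix T assume T: "T \<subseteq> {2..k} \<and> card T = k - 1"
    then have "T = {2..k}" by (intro card_subset_eq) auto
    then show "generates k (Wrec Gp k k) l0 (insert 1 T)" using gen T k unfolding W by auto
  qed
  show ?case
    apply (intro conjI)
      apply (rule valid[folded W])
     apply (rule gens)
    apply (rule exI[of _ \<tau>])
    using inj img labs by blast
next
  case (step n)
  have kn: "k \<le> n" by fact
  from step.IH obtain \<tau>' where vW': "valid_circuit n (Wrec Gp k n)"
    and genW': "\<forall>T. T \<subseteq> {2..n} \<and> card T = k-1 \<longrightarrow> generates n (Wrec Gp k n) l0 (insert 1 T)"
    and inj': "inj_on \<tau>' ({1..n}-{n-k+1})" and img': "\<tau>' ` ({1..n}-{n-k+1}) \<subseteq> {2..n}"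
    and lab': "\<forall>i\<in>{1..n}. apply_circuit l0 (Wrec Gp k n) i =
         (if i = n-k+1 then {1} else if i \<le> n-k+2 then {1, \<tau>' i} else {\<tau>' i})"
    by blast
  have G: "clean_special_gen (k-1) (Suc n - 1) (Gp (Suc n - 1))" using hG kn by simp
  define A where "A = CX 1 2 @ shift 2 (Gp n)"
  obtain \<pi> where pb: "bij_betw \<pi> {1..n} {1..n}" and p1: "\<pi> 1 = 1"
    and vA: "valid_circuit (Suc n) A"
    and labA: "\<forall>j\<in>{1..Suc n}. apply_circuit l0 A j =
        (if j = 1 then {1} else if j = 2 then {1,2} else {\<pi> (j-1) + 1})"
    and genA: "\<forall>T. T \<subseteq> {2..Suc n} \<and> 2 \<in> T \<and> card T = k - 1 \<longrightarrow>
        generates (Suc n) A l0 (insert 1 T)"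
    using partA[OF G k] kn unfolding A_def by auto
  have pinj: "inj_on \<pi> {1..n}" and pin: "\<And>i. i \<in> {2..n} \<Longrightarrow> \<pi> i \<in> {2..n}"
     and pim: "\<pi> ` {2..n} = {2..n}"
    using perm_fix1[OF pb p1] k kn by auto
  define W' where "W' = Wrec Gp k n"
  have W: "Wrec Gp k (Suc n) = (A @ SW 1 2) @ shift 2 W'"
    using Wrec_step[of k "Suc n" Gp] kn unfolding A_def W'_def by simp
  define l3 where "l3 = (apply_circuit l0 A)(1 := {1,2}, 2 := {1})"
  have l3: "apply_circuit l0 (A @ SW 1 2) = l3"
    unfolding apply_circuit_append l3_def using labA kn k by (simp add: apply_SW)
  define lp where "lp i = l3 (i+1)" for i
  have lp1: "lp 1 = {1}" by (simp add: lp_def l3_def)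
  have lpi: "lp i = {\<pi> i + 1}" if "i \<in> {2..n}" for i
    using that labA by (simp add: lp_def l3_def)
  have vW'n: "valid_circuit n W'" using vW' by (simp add: W'_def)
  define p where "p = Suc n - k + 1"
  have p: "p = n - k + 2" "p \<ge> 2" "n - k + 1 = p - 1" using kn by (auto simp: p_def)
  define \<tau> where "\<tau> j = (if j = 1 then 2 else \<pi> (\<tau>' (j-1)) + 1)" for j
  have t'in: "\<tau>' i \<in> {2..n}" if "i \<in> {1..n} - {n-k+1}" for i using img' that by blast
  have labs: "apply_circuit l0 (Wrec Gp k (Suc n)) j =
         (if j = p then {1} else if j \<le> p + 1 then {1, \<tau> j} else {\<tau> j})" if j: "j \<in> {1..Suc n}" for j
  proof -
    have e: "apply_circuit l0 (Wrec Gp k (Suc n)) j = apply_circuit l3 (shift 2 W') j"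
      unfolding W apply_circuit_append[of l0 "A @ SW 1 2"] l3 by (rule refl)
    show ?thesis
    proof (cases "j = 1")
      case True
      have "apply_circuit l3 (shift 2 W') 1 = l3 1" by (rule lab_shift2_1[OF vW'n])
      then show ?thesis using e True p by (simp add: l3_def \<tau>_def)
    next
      case False
      then have j2: "j \<ge> 2" "j - 1 \<le> n" "j - 1 \<in> {1..n}" using j by auto
      have e2: "apply_circuit l3 (shift 2 W') j = xs lp (apply_circuit l0 W' (j-1))"
        using lab_shift2[OF vW'n j2(1,2)] unfolding lp_def by simp
      have L: "apply_circuit l0 W' (j-1) =
         (if j - 1 = n-k+1 then {1} else if j - 1 \<le> n-k+2 then {1, \<tau>' (j-1)} else {\<tau>' (j-1)})"
        using lab' j2(3) by (simp add: W'_def)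
      show ?thesis
      proof (cases "j - 1 = n - k + 1")
        case True
        then have "j = p" using p j2 by simp
        then show ?thesis unfolding e e2 L using True lp1 by simp
      next
        case nf: False
        then have jp: "j \<noteq> p" using p j2 by auto
        have tin: "\<tau>' (j-1) \<in> {2..n}" using t'in[of "j-1"] j2 nf by blast
        have tau: "\<tau> j = \<pi> (\<tau>' (j-1)) + 1" using False by (simp add: \<tau>_def)
        show ?thesis
        proof (cases "j - 1 \<le> n-k+2")
          case True
          have dj: "lp 1 \<inter> lp (\<tau>' (j-1)) = {}" using lp1 lpi[OF tin] pin[OF tin] by auto
          have "xs lp {1, \<tau>' (j-1)} = (\<Union>i\<in>{1, \<tau>' (j-1)}. lp i)"
            by (rule xs_disj) (use dj in auto)
          then have "xs lp {1, \<tau>' (j-1)} = lp 1 \<union> lp (\<tau>' (j-1))" by simp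
          then have "xs lp {1, \<tau>' (j-1)} = {1, \<tau> j}" using lp1 lpi[OF tin] tau by auto
          moreover have "j \<le> p + 1" using True p by simp
          ultimately show ?thesis unfolding e e2 L using nf True jp by simp
        next
          case nT: False
          then have "\<not> j \<le> p + 1" using p j2 by simp
          then show ?thesis unfolding e e2 L using nf nT jp lpi[OF tin] tau by simp
        qed
      qed
    qed
  qed
  have inj: "inj_on \<tau> ({1..Suc n} - {Suc n - k + 1})"
  proof (rule inj_onI)
    fix x y assume x: "x \<in> {1..Suc n} - {Suc n - k + 1}" and y: "y \<in> {1..Suc n} - {Suc n - k + 1}"
      and e: "\<tau> x = \<tau> y"
    have xd: "x \<noteq> 1 \<Longrightarrow> x - 1 \<in> {1..n} - {n-k+1}" using x kn by auto
    have yd: "y \<noteq> 1 \<Longrightarrow> y - 1 \<in> {1..n} - {n-k+1}" using y kn by auto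
    show "x = y"
    proof (cases "x = 1 \<or> y = 1")
      case True
      have big: "\<tau> z \<ge> 3" if "z \<noteq> 1" "z - 1 \<in> {1..n} - {n-k+1}" for z
      proof -
        have "\<pi> (\<tau>' (z-1)) \<in> {2..n}" using pin t'in that(2) by blast
        then show ?thesis using that(1) by (simp add: \<tau>_def)
      qed
      have t1: "\<tau> 1 = 2" by (simp add: \<tau>_def)
      show ?thesis
      proof (rule ccontr)
        assume "x \<noteq> y"
        show False
        proof (cases "x = 1")
          case True
          then have "y \<noteq> 1" using \<open>x \<noteq> y\<close> by simp
          then have "\<tau> y \<ge> 3" using big yd by blast
          then show False using e t1 True by simp
        next
          case False
          then have "y = 1" using \<open>x = 1 \<or> y = 1\<close> by simp
          have "\<tau> x \<ge> 3" using big xd False by blast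
          then show False using e t1 \<open>y = 1\<close> by simp
        qed
      qed
    next
      case False
      then have "\<pi> (\<tau>' (x-1)) = \<pi> (\<tau>' (y-1))" using e by (simp add: \<tau>_def)
      then have "\<tau>' (x-1) = \<tau>' (y-1)"
        using inj_onD[OF pinj] t'in[OF xd] t'in[OF yd] False by auto
      then have "x - 1 = y - 1" using inj_onD[OF inj'] xd yd False by blast
      then show ?thesis using x y by auto
    qed
  qed
  have img: "\<tau> ` ({1..Suc n} - {Suc n - k + 1}) \<subseteq> {2..Suc n}"
  proof
    fix t assume "t \<in> \<tau> ` ({1..Suc n} - {Suc n - k + 1})"
    then obtain x where x: "x \<in> {1..Suc n} - {Suc n - k + 1}" "t = \<tau> x" by blast
    show "t \<in> {2..Suc n}"
    proof (cases "x = 1")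
      case True then show ?thesis using x kn k by (simp add: \<tau>_def)
    next
      case False
      then have "x - 1 \<in> {1..n} - {n-k+1}" using x kn by auto
      then have "\<pi> (\<tau>' (x-1)) \<in> {2..n}" using t'in pin by blast
      then show ?thesis using x False by (simp add: \<tau>_def)
    qed
  qed
  have gens: "generates (Suc n) (Wrec Gp k (Suc n)) l0 (insert 1 T)"
    if T: "T \<subseteq> {2..Suc n}" "card T = k-1" for T
  proof (cases "2 \<in> T")
    case True
    then have "generates (Suc n) A l0 (insert 1 T)" using genA T by blast
    then have "generates (Suc n) (A @ (SW 1 2 @ shift 2 W')) l0 (insert 1 T)" by (rule gen_prefix)
    then show ?thesis unfolding W by (simp only: append_assoc)
  next
    case False
    have T3: "T \<subseteq> {3..Suc n}"
    proof
      fix t assume "t \<in> T"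
      then have "t \<in> {2..Suc n}" "t \<noteq> 2" using T(1) False by blast+
      then show "t \<in> {3..Suc n}" by auto
    qed
    define f where "f i = \<pi> i + 1" for i
    define S where "S = {i\<in>{2..n}. f i \<in> T}"
    have finj: "inj_on f {2..n}"
    proof (rule inj_onI)
      fix x y assume xy: "x \<in> {2..n}" "y \<in> {2..n}" "f x = f y"
      then have "\<pi> x = \<pi> y" by (simp add: f_def)
      moreover have "x \<in> {1..n}" "y \<in> {1..n}" using xy by auto
      ultimately show "x = y" using inj_onD[OF pinj] by blast
    qed
    have fim: "f ` {2..n} = {3..Suc n}"
    proof -
      have "f ` {2..n} = (\<lambda>x. x + 1) ` (\<pi> ` {2..n})" unfolding f_def image_image by simp
      also have "\<dots> = (\<lambda>x. x + 1) ` {2..n}" using pim by simp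
      also have "\<dots> = {3..Suc n}" by (simp add: image_add_atLeastAtMost)
      finally show ?thesis .
    qed
    have fS: "f ` S = T"
    proof
      show "f ` S \<subseteq> T" unfolding S_def by auto
      show "T \<subseteq> f ` S"
      proof
        fix t assume "t \<in> T"
        then have "t \<in> f ` {2..n}" using fim T3 by blast
        then obtain i where "i \<in> {2..n}" "t = f i" by blast
        then show "t \<in> f ` S" unfolding S_def using \<open>t \<in> T\<close> by blast
      qed
    qed
    have Ssub: "S \<subseteq> {2..n}" unfolding S_def by blast
    have cS: "card S = k - 1"
      using card_image[OF inj_on_subset[OF finj Ssub]] fS T by simp
    have g1: "generates n W' l0 (insert 1 S)" using genW' Ssub cS unfolding W'_def by blast
    have g2: "generates (Suc n) (shift 2 W') l3 (xs lp (insert 1 S))"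
      using gen_shift[OF vW'n _ _ g1, of 2 "Suc n" l3] unfolding lp_def by simp
    have "xs lp (insert 1 S) = (\<Union>i\<in>insert 1 S. lp i)"
    proof (rule xs_disj)
      show "finite (insert 1 S)" using Ssub finite_subset by blast
      fix i j assume "i \<in> insert 1 S" "j \<in> insert 1 S" "i \<noteq> j"
      note ij = this
      have lpS: "lp i = {\<pi> i + 1} \<and> \<pi> i \<in> {2..n}" if "i \<in> S" for i
        using that Ssub lpi pin by blast
      show "lp i \<inter> lp j = {}"
      proof (cases "i = 1 \<or> j = 1")
        case True
        note ij1 = True
        show ?thesis
        proof (cases "i = 1")
          case True then have "j \<in> S" using ij by auto
          from lpS[OF this] show ?thesis using True lp1 by auto
        next
          case False then have "j = 1" "i \<in> S" using ij1 ij by auto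
          from lpS[OF this(2)] show ?thesis using \<open>j = 1\<close> lp1 by auto
        qed
      next
        case False
        then have iS: "i \<in> S" "j \<in> S" using ij by auto
        have "i \<in> {1..n}" "j \<in> {1..n}" using iS Ssub by auto
        then have "\<pi> i \<noteq> \<pi> j" using inj_onD[OF pinj, of i j] ij(3) by blast
        then show ?thesis using lpS[OF iS(1)] lpS[OF iS(2)] by auto
      qed
    qed
    also have "\<dots> = insert 1 T"
    proof -
      have "(\<Union>i\<in>S. lp i) = (\<Union>i\<in>S. {f i})"
      proof (rule SUP_cong[OF refl])
        fix i assume "i \<in> S"
        then have "i \<in> {2..n}" using Ssub by blast
        then show "lp i = {f i}" using lpi by (simp add: f_def)
      qed
      also have "\<dots> = T" using fS by auto
      finally show ?thesis using lp1 by auto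
    qed
    finally have "generates (Suc n) (shift 2 W') l3 (insert 1 T)" using g2 by simp
    then show ?thesis unfolding W using gen_suffix[of "Suc n" "shift 2 W'" l0 "A @ SW 1 2"] l3 by simp
  qed
  have valid: "valid_circuit (Suc n) (Wrec Gp k (Suc n))"
    unfolding W using vA k kn by (auto intro!: valid_SW valid_shift[OF vW'n])
  have gens': "\<forall>T. T \<subseteq> {2..Suc n} \<and> card T = k-1 \<longrightarrow> generates (Suc n) (Wrec Gp k (Suc n)) l0 (insert 1 T)"
    using gens by blast
  have p2: "p + 1 = Suc n - k + 2" using p kn by simp
  have labs': "\<forall>i\<in>{1..Suc n}. apply_circuit l0 (Wrec Gp k (Suc n)) i =
         (if i = Suc n-k+1 then {1} else if i \<le> Suc n-k+2 then {1, \<tau> i} else {\<tau> i})"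
    using labs unfolding p2[symmetric] p_def by blast
  show ?case
    apply (intro conjI)
      apply (rule valid)
     apply (rule gens')
    apply (rule exI[of _ \<tau>])
    using inj img labs' by blast
qed



lemma Gk_le: "k \<le> k0 \<Longrightarrow> Gk k0 G0 k = G0"
  by (subst Gk.simps) simp

lemma Gk_gt: "k > k0 \<Longrightarrow> Gk k0 G0 k = (\<lambda>n. Wrec (Gk k0 G0 (k - 1)) k n @ CX (n - k + 1) (n - k + 2)
                  @ mirror 1 (n - k + 1) (PTC (n - k + 1)))"
  by (subst Gk.simps) simp

definition chl :: "nat \<Rightarrow> circuit" where
  "chl p = concat (map (\<lambda>i. DX (p+1-i) (p-i)) [1..<p])"

lemma shift1: "shift 1 C = C"
  unfolding shift_def by (simp add: case_prod_beta)

lemma mirror_PTC: "mirror 1 p (PTC p) = chl p"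
proof -
  have "mirror 1 p (PTC p) = concat (map (map ((`) (\<lambda>(i,j). (1+p-i, 1+p-j)))) (map (\<lambda>i. DX i (i+1)) [1..<p]))"
    unfolding mirror_def shift1 PTC_def by (simp add: map_concat)
  also have "\<dots> = chl p"
    unfolding chl_def map_map
  proof (rule arg_cong[where f = concat], rule map_cong[OF refl])
    fix i assume "i \<in> set [1..<p]"
    then have i: "1 \<le> i" "i < p" by auto
    show "(map ((`) (\<lambda>(i, j). (1 + p - i, 1 + p - j))) \<circ> (\<lambda>i. DX i (i + 1))) i = DX (p + 1 - i) (p - i)"
      using i by (simp add: DX_def CX_def)
  qed
  finally show ?thesis .
qed

lemma chl_Suc: "q \<ge> 1 \<Longrightarrow> chl (Suc q) = DX (Suc q) q @ chl q"
proof -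
  assume q: "q \<ge> 1"
  have u: "[1..<Suc q] = 1 # map Suc [1..<q]"
    using q by (simp add: upt_conv_Cons map_Suc_upt)
  show ?thesis unfolding chl_def u by (simp add: o_def)
qed

lemma chl_1: "chl 1 = []" by (simp add: chl_def)

lemma symd_a: "x \<noteq> 1 \<Longrightarrow> symd {1, x} {1} = {x}" by (auto simp: symd_def)
lemma symd_b: "x \<noteq> 1 \<Longrightarrow> symd {x} {1, x} = {1}" by (auto simp: symd_def)
lemma symd_c: "x \<noteq> 1 \<Longrightarrow> symd {1} {1, x} = {x}" by (auto simp: symd_def)

lemma chl_act:
  assumes "q \<ge> 1" "\<forall>i. 1 \<le> i \<and> i < q \<longrightarrow> s i = {1, c i} \<and> c i \<noteq> 1" "s q = {1}"
  shows "apply_circuit s (chl q) = (\<lambda>j. if j = 1 then {1} else if 2 \<le> j \<and> j \<le> q then {c (j-1)} else s j)"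
  using assms
proof (induction q arbitrary: s)
  case 0 then show ?case by simp
next
  case (Suc q)
  show ?case
  proof (cases "q = 0")
    case True
    have s1: "s 1 = {1}" using Suc.prems(3) True by simp
    show ?thesis unfolding True
    proof (rule ext)
      fix j show "apply_circuit s (chl (Suc 0)) j =
        (if j = 1 then {1} else if 2 \<le> j \<and> j \<le> Suc 0 then {c (j - 1)} else s j)"
        using s1 by (simp add: chl_def)
    qed
  next
    case False
    then have q1: "q \<ge> 1" by simp
    have sq: "s q = {1, c q}" "c q \<noteq> 1" using Suc.prems(2) q1 by auto
    define s2 where "s2 = s(Suc q := {c q}, q := {1})"
    have e1: "symd (s q) (s (Suc q)) = {c q}" using sq Suc.prems(3) symd_a by simp
    have "apply_circuit s (DX (Suc q) q) = (s(Suc q := {c q}))(q := symd {c q} {1, c q})"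
      unfolding DX_def apply_circuit_append apply_CX by (rule ext) (use sq Suc.prems(3) in \<open>auto simp: symd_def\<close>)
    then have dx: "apply_circuit s (DX (Suc q) q) = s2"
      unfolding s2_def using symd_b[OF sq(2)] by simp
    have p2: "\<forall>i. 1 \<le> i \<and> i < q \<longrightarrow> s2 i = {1, c i} \<and> c i \<noteq> 1"
      using Suc.prems(2) by (simp add: s2_def)
    have p3: "s2 q = {1}" by (simp add: s2_def)
    have ih: "apply_circuit s2 (chl q) = (\<lambda>j. if j = 1 then {1} else if 2 \<le> j \<and> j \<le> q then {c (j-1)} else s2 j)"
      by (rule Suc.IH[OF q1 p2 p3])
    show ?thesis unfolding chl_Suc[OF q1] apply_circuit_append dx ih
    proof (rule ext)
      fix j show "(if j = 1 then {1} else if 2 \<le> j \<and> j \<le> q then {c (j-1)} else s2 j) =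
         (if j = 1 then {1} else if 2 \<le> j \<and> j \<le> Suc q then {c (j-1)} else s j)"
        using q1 by (cases "j = Suc q") (simp_all add: s2_def)
    qed
  qed
qed

lemma valid_concat: "(\<And>x. x \<in> set ys \<Longrightarrow> valid_circuit n (g x)) \<Longrightarrow> valid_circuit n (concat (map g ys))"
  unfolding valid_circuit_def by auto

lemma valid_chl: "p \<le> n \<Longrightarrow> valid_circuit n (chl p)"
  unfolding chl_def by (rule valid_concat, rule valid_DX) auto

lemma csize_append: "csize (A @ B) = csize A + csize B"
  unfolding csize_def by simp

lemma csize_CX[simp]: "csize (CX i j) = 1" by (simp add: csize_def CX_def)
lemma csize_DX[simp]: "csize (DX i j) = 2" by (simp add: DX_def csize_append)
lemma csize_SW[simp]: "csize (SW i j) = 3" by (simp add: SW_def csize_append)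

lemma csize_concat: "csize (concat (map g ys)) = (\<Sum>x\<leftarrow>ys. csize (g x))"
  by (induction ys) (auto simp: csize_append, simp add: csize_def)

lemma csize_chl: "csize (chl p) = 2 * (p - 1)"
proof -
  have "csize (chl p) = (\<Sum>i\<leftarrow>[1..<p]. csize (DX (p+1-i) (p-i)))"
    unfolding chl_def by (rule csize_concat)
  also have "\<dots> = 2 * (p - 1)" by (simp add: sum_list_triv)
  finally show ?thesis .
qed

lemma length_chl: "length (chl p) = 2 * (p - 1)"
proof -
  have "length (chl p) = (\<Sum>i\<leftarrow>[1..<p]. length (DX (p+1-i) (p-i)))"
    unfolding chl_def by (simp add: length_concat o_def)
  also have "\<dots> = 2 * (p - 1)" by (simp add: sum_list_triv DX_def CX_def)
  finally show ?thesis .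
qed

lemma csize_shift: "p \<ge> 1 \<Longrightarrow> csize (shift p C) = csize C"
proof -
  assume p: "p \<ge> 1"
  have "card (shiftM (p-1) M) = card M" for M
    unfolding shiftM_def by (rule card_image) (auto simp: inj_on_def)
  then show ?thesis unfolding shift_eq[OF p] csize_def by (simp add: o_def)
qed



lemma Gk_step_clean:
  assumes k: "k \<ge> 3" and hG: "\<forall>m\<ge>k-1. clean_special_gen (k-1) m (Gp m)" and n: "k \<le> n"
  shows "clean_special_gen k n (Wrec Gp k n @ CX (n-k+1) (n-k+2) @ mirror 1 (n-k+1) (PTC (n-k+1)))"
proof -
  define W where "W = Wrec Gp k n"
  define p where "p = n - k + 1"
  have p2: "n - k + 2 = p + 1" unfolding p_def by simp
  obtain \<tau> where vW: "valid_circuit n W"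
    and genW: "\<forall>T. T \<subseteq> {2..n} \<and> card T = k-1 \<longrightarrow> generates n W l0 (insert 1 T)"
    and inj: "inj_on \<tau> ({1..n}-{p})" and img: "\<tau> ` ({1..n}-{p}) \<subseteq> {2..n}"
    and lab: "\<forall>i\<in>{1..n}. apply_circuit l0 W i =
         (if i = p then {1} else if i \<le> p + 1 then {1, \<tau> i} else {\<tau> i})"
    using W_inv[OF k hG n] unfolding W_def[symmetric] p_def[symmetric] p2 by blast
  have p1: "p \<ge> 1" "p + 1 \<le> n" using k n unfolding p_def by auto
  define C where "C = W @ CX p (p+1) @ chl p"
  have Ceq: "Wrec Gp k n @ CX (n-k+1) (n-k+2) @ mirror 1 (n-k+1) (PTC (n-k+1)) = C"
    unfolding C_def W_def p2 p_def[symmetric] mirror_PTC by simp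
  have valid: "valid_circuit n C"
    unfolding C_def using vW p1 by (auto intro!: valid_CX valid_chl)
  have gen: "\<forall>S. S \<subseteq> {2..n} \<and> card S = k - 1 \<longrightarrow> generates n C l0 (insert 1 S)"
    unfolding C_def using genW gen_prefix by blast
  have tin: "\<tau> i \<in> {2..n}" if "i \<in> {1..n}" "i \<noteq> p" for i using img that by blast
  define s1 where "s1 = apply_circuit l0 W"
  define s2 where "s2 = s1(p+1 := {\<tau> (p+1)})"
  have s1p: "s1 p = {1}" using lab p1 unfolding s1_def by simp
  have s1p1: "s1 (p+1) = {1, \<tau> (p+1)}" using lab p1 unfolding s1_def by simp
  have tp1: "\<tau> (p+1) \<noteq> 1" using tin[of "p+1"] p1 by auto
  have a1: "apply_circuit l0 (W @ CX p (p+1)) = s2"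
    unfolding apply_circuit_append apply_CX s2_def s1_def[symmetric] s1p s1p1 symd_c[OF tp1] ..
  have pr2: "\<forall>i. 1 \<le> i \<and> i < p \<longrightarrow> s2 i = {1, \<tau> i} \<and> \<tau> i \<noteq> 1"
  proof (intro allI impI)
    fix i assume i: "1 \<le> i \<and> i < p"
    then have "s1 i = {1, \<tau> i}" using lab p1 unfolding s1_def by auto
    moreover have "\<tau> i \<in> {2..n}" using tin[of i] i p1 by auto
    ultimately show "s2 i = {1, \<tau> i} \<and> \<tau> i \<noteq> 1" using i by (auto simp: s2_def)
  qed
  have pr3: "s2 p = {1}" using s1p by (simp add: s2_def)
  have fin: "apply_circuit l0 C = (\<lambda>j. if j = 1 then {1} else if 2 \<le> j \<and> j \<le> p then {\<tau> (j-1)} else s2 j)"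
    unfolding C_def append_assoc[symmetric] apply_circuit_append[of l0 "W @ CX p (p+1)"] a1
    by (rule chl_act[OF p1(1) pr2 pr3])
  define \<pi> where "\<pi> j = (if j = 1 then 1 else if j \<le> p then \<tau> (j-1) else \<tau> j)" for j
  have labC: "apply_circuit l0 C j = {\<pi> j}" if j: "j \<in> {1..n}" for j
  proof -
    consider "j = 1" | "j \<noteq> 1" "j \<le> p" | "j = p + 1" | "j > p + 1" by linarith
    then show ?thesis
    proof cases
      case 1 then show ?thesis unfolding fin \<pi>_def by simp
    next
      case 2 then show ?thesis using j unfolding fin \<pi>_def by simp
    next
      case 3 then show ?thesis using p1 unfolding fin \<pi>_def s2_def by simp
    next
      case 4 then show ?thesis using j lab p1 unfolding fin \<pi>_def s2_def s1_def by simp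
    qed
  qed
  define h where "h j = (if j \<le> p then j - 1 else j)" for j
  have hin: "h j \<in> {1..n} - {p}" if "j \<in> {2..n}" for j using that by (auto simp: h_def)
  have pih: "\<pi> j = \<tau> (h j)" if "j \<in> {2..n}" for j using that by (simp add: \<pi>_def h_def)
  have pin: "\<pi> j \<in> {1..n}" if "j \<in> {1..n}" for j
  proof (cases "j = 1")
    case True then show ?thesis using p1 by (simp add: \<pi>_def)
  next
    case False
    then have "j \<in> {2..n}" using that by auto
    then show ?thesis using pih tin hin by force
  qed
  have pinj: "inj_on \<pi> {1..n}"
  proof (rule inj_onI)
    fix x y assume x: "x \<in> {1..n}" and y: "y \<in> {1..n}" and e: "\<pi> x = \<pi> y"
    show "x = y"
    proof (cases "x = 1 \<or> y = 1")
      case True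
      have ge2: "\<pi> z \<ge> 2" if "z \<in> {2..n}" for z using pih[OF that] tin hin[OF that] by force
      show ?thesis
      proof (rule ccontr)
        assume "x \<noteq> y"
        then have "(x = 1 \<and> y \<in> {2..n}) \<or> (y = 1 \<and> x \<in> {2..n})" using True x y by auto
        then show False
        proof (elim disjE conjE)
          assume a: "x = 1" "y \<in> {2..n}"
          have "\<pi> y \<ge> 2" using ge2[OF a(2)] .
          moreover have "\<pi> x = 1" using a(1) by (simp add: \<pi>_def)
          ultimately show False using e by simp
        next
          assume a: "y = 1" "x \<in> {2..n}"
          have "\<pi> x \<ge> 2" using ge2[OF a(2)] .
          moreover have "\<pi> y = 1" using a(1) by (simp add: \<pi>_def)
          ultimately show False using e by simp
        qed
      qed
    next
      case False
      then have x2: "x \<in> {2..n}" and y2: "y \<in> {2..n}" using x y by auto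
      have "\<tau> (h x) = \<tau> (h y)" using e pih[OF x2] pih[OF y2] by simp
      then have "h x = h y" using inj_onD[OF inj] hin[OF x2] hin[OF y2] by blast
      then show ?thesis using x2 y2 by (auto simp: h_def split: if_splits)
    qed
  qed
  have "\<pi> ` {1..n} = {1..n}"
    by (rule endo_inj_surj) (use pin pinj in auto)
  then have bij: "bij_betw \<pi> {1..n} {1..n}" using pinj by (simp add: bij_betw_def)
  have "clean_special_gen k n C"
    unfolding clean_special_gen_def
    using n valid gen bij labC by (auto simp: \<pi>_def)
  then show ?thesis unfolding Ceq .
qed

lemma Gk_clean:
  assumes k0: "k0 \<ge> 2" and h0: "\<forall>n\<ge>k0. clean_special_gen k0 n (G0 n)" and k: "k0 \<le> k"
  shows "\<forall>n\<ge>k. clean_special_gen k n (Gk k0 G0 k n)"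
  using k
proof (induction k rule: dec_induct)
  case base then show ?case using h0 by (simp add: Gk_le)
next
  case (step k)
  have "Gk k0 G0 (Suc k) = (\<lambda>n. Wrec (Gk k0 G0 k) (Suc k) n @ CX (n - Suc k + 1) (n - Suc k + 2)
                  @ mirror 1 (n - Suc k + 1) (PTC (n - Suc k + 1)))"
    using Gk_gt[of k0 "Suc k" G0] step.hyps by simp
  moreover have "\<forall>m\<ge>Suc k - 1. clean_special_gen (Suc k - 1) m (Gk k0 G0 k m)"
    using step.IH by simp
  ultimately show ?case
    using Gk_step_clean[of "Suc k" "Gk k0 G0 k"] step.hyps k0 by simp
qed



lemma powL1: "(n::nat)^(d+1) + (d+1)*n^d \<le> (n+1)^(d+1)"
proof (induction d)
  case 0 then show ?case by simp
next
  case (Suc d)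
  have "(n+1)^(Suc d+1) = (n+1) * (n+1)^(d+1)" by simp
  also have "\<dots> \<ge> (n+1) * (n^(d+1) + (d+1)*n^d)" using Suc.IH by (rule mult_le_mono2)
  finally have a: "(n+1) * (n^(d+1) + (d+1)*n^d) \<le> (n+1)^(Suc d+1)" .
  have "(n+1) * (n^(d+1) + (d+1)*n^d) = n^(d+2) + n^(d+1) + (d+1)*n^(d+1) + (d+1)*n^d"
    by (simp add: algebra_simps power_Suc)
  then have "n^(Suc d+1) + (Suc d+1)*n^(Suc d) \<le> (n+1) * (n^(d+1) + (d+1)*n^d)"
    by (simp add: algebra_simps)
  then show ?case using a by linarith
qed




lemma powL2: "((n::nat)+1)^(d+1) \<le> n^(d+1) + (d+1)*(n+1)^d"
proof (induction d)
  case 0 then show ?case by simp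
next
  case (Suc d)
  have "(n+1)^(Suc d+1) = (n+1) * (n+1)^(d+1)" by simp
  also have "\<dots> \<le> (n+1) * (n^(d+1) + (d+1)*(n+1)^d)" using Suc.IH by (rule mult_le_mono2)
  also have "\<dots> = n^(d+2) + n^(d+1) + (d+1)*(n+1)^(d+1)"
    by (simp add: algebra_simps power_Suc)
  also have "\<dots> \<le> n^(d+2) + (n+1)^(d+1) + (d+1)*(n+1)^(d+1)"
    using power_mono[of n "n+1" "d+1"] by simp
  also have "\<dots> = n^(Suc d+1) + (Suc d+1)*(n+1)^(Suc d)" by simp
  finally show ?case .
qed

lemma sum_pow_bounds:
  "(d+1) * (\<Sum>m<n. m^d) \<le> (n::nat)^(d+1) \<and> n^(d+1) \<le> (d+1) * (\<Sum>m<n. m^d) + (d+1) * n^d"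
proof (induction n)
  case 0 then show ?case by simp
next
  case (Suc n)
  have s: "(d+1) * (\<Sum>m<Suc n. m^d) = (d+1) * (\<Sum>m<n. m^d) + (d+1)*n^d" by (simp add: algebra_simps)
  have "(d+1) * (\<Sum>m<Suc n. m^d) \<le> (Suc n)^(d+1)"
    using s Suc.IH powL1[of n d] by simp
  moreover have "(Suc n)^(d+1) \<le> (d+1) * (\<Sum>m<Suc n. m^d) + (d+1) * (Suc n)^d"
    using s Suc.IH powL2[of n d] by simp
  ultimately show ?case by blast
qed

lemma sum_pow_real:
  "\<bar>(\<Sum>m<n. real m ^ d) - real n ^ (d+1) / real (d+1)\<bar> \<le> real n ^ d"
proof -
  have a: "real (d+1) * (\<Sum>m<n. real m ^ d) \<le> real n ^ (d+1)"
  proof -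
    have "real ((d+1) * (\<Sum>m<n. m^d)) \<le> real (n^(d+1))"
      using sum_pow_bounds[of d n] by (intro of_nat_mono) blast
    then show ?thesis by (simp add: algebra_simps)
  qed
  have b: "real n ^ (d+1) \<le> real (d+1) * (\<Sum>m<n. real m ^ d) + real (d+1) * real n ^ d"
  proof -
    have "real (n^(d+1)) \<le> real ((d+1) * (\<Sum>m<n. m^d) + (d+1) * n^d)"
      using sum_pow_bounds[of d n] by (intro of_nat_mono) blast
    then show ?thesis by (simp add: algebra_simps)
  qed
  have pos: "real (d+1) > 0" by simp
  have a': "(\<Sum>m<n. real m ^ d) \<le> real n ^ (d+1) / real (d+1)"
    using a pos by (simp add: field_simps)
  have b': "real n ^ (d+1) / real (d+1) \<le> (\<Sum>m<n. real m ^ d) + real n ^ d"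
    using b pos by (simp add: field_simps)
  show ?thesis using a' b' by linarith
qed

lemma sum_pow_le: "(\<Sum>m<n. real m ^ e) \<le> real n ^ (e+1)"
proof -
  have "(\<Sum>m<n. real m ^ e) \<le> (\<Sum>m<n. real n ^ e)"
    by (rule sum_mono) (simp add: power_mono)
  also have "\<dots> = real n ^ (e+1)" by simp
  finally show ?thesis .
qed

lemma sum_asymp:
  fixes g F :: "nat \<Rightarrow> real" and c K :: real and d :: nat
  assumes d: "d \<ge> 1"
    and hg: "(\<lambda>m. g m - c * real m ^ d) \<in> O(\<lambda>m. real m powr (real d - 1))"
    and hF: "eventually (\<lambda>n. \<bar>F n - (\<Sum>m<n. g m)\<bar> \<le> K * real n) at_top"
  shows "(\<lambda>n. F n - c / real (d+1) * real n ^ (d+1)) \<in> O(\<lambda>n. real n powr real d)"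
proof -
  define h where "h m = g m - c * real m ^ d" for m
  obtain C where C: "C > 0" and ev: "eventually (\<lambda>m. norm (h m) \<le> C * norm (real m powr (real d - 1))) at_top"
    using landau_o.bigE[OF hg] unfolding h_def by blast
  then obtain N where N0: "\<forall>m\<ge>N. norm (h m) \<le> C * norm (real m powr (real d - 1))"
    unfolding eventually_at_top_linorder by blast
  have N: "\<bar>h m\<bar> \<le> C * norm (real m powr (real d - 1))" if "m \<ge> N" for m
    using N0 that by (metis real_norm_def)
  have pw: "norm (real m powr (real d - 1)) \<le> real m ^ (d-1)" for m
  proof (cases "m = 0")
    case True then show ?thesis by simp
  next
    case False
    have e: "real d - 1 = real (d - 1)" using d by simp
    have "real m powr real (d - 1) = real m ^ (d-1)" by (rule powr_realpow) (use False in simp)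
    then have "real m powr (real d - 1) = real m ^ (d-1)" unfolding e .
    then show ?thesis by simp
  qed
  define A where "A = (\<Sum>m<N. \<bar>h m\<bar>)"
  have A0: "A \<ge> 0" unfolding A_def by (simp add: sum_nonneg)
  have hb: "\<bar>h m\<bar> \<le> A + C * real m ^ (d-1)" for m
  proof (cases "m < N")
    case True
    have "\<bar>h m\<bar> \<le> A" unfolding A_def by (rule member_le_sum) (use True in auto)
    moreover have "C * real m ^ (d-1) \<ge> 0" using C by simp
    ultimately show ?thesis by linarith
  next
    case False
    then have "\<bar>h m\<bar> \<le> C * norm (real m powr (real d - 1))" using N by simp
    also have "\<dots> \<le> C * real m ^ (d-1)" using pw[of m] C by (intro mult_left_mono) auto
    finally have "\<bar>h m\<bar> \<le> C * real m ^ (d-1)" .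
    then show ?thesis using A0 by linarith
  qed
  have sumh: "\<bar>\<Sum>m<n. h m\<bar> \<le> real n * A + C * real n ^ d" for n
  proof -
    have "\<bar>\<Sum>m<n. h m\<bar> \<le> (\<Sum>m<n. \<bar>h m\<bar>)" by (rule sum_abs)
    also have "\<dots> \<le> (\<Sum>m<n. A + C * real m ^ (d-1))" by (rule sum_mono) (rule hb)
    also have "\<dots> = real n * A + C * (\<Sum>m<n. real m ^ (d-1))" by (simp add: sum.distrib sum_distrib_left)
    also have "\<dots> \<le> real n * A + C * real n ^ d"
      using sum_pow_le[where n=n and e="d-1"] C d by simp
    finally show ?thesis .
  qed
  define B where "B = \<bar>K\<bar> + A + C + \<bar>c\<bar>"
  have main: "\<bar>F n - c / real (d+1) * real n ^ (d+1)\<bar> \<le> B * real n ^ d"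
    if n1: "n \<ge> 1" and hFn: "\<bar>F n - (\<Sum>m<n. g m)\<bar> \<le> K * real n" for n
  proof -
    have gs: "(\<Sum>m<n. g m) = (\<Sum>m<n. h m) + c * (\<Sum>m<n. real m ^ d)"
      unfolding h_def by (simp add: sum_subtractf sum_distrib_left)
    have e: "F n - c / real (d+1) * real n ^ (d+1) =
       (F n - (\<Sum>m<n. g m)) + (\<Sum>m<n. h m) + c * ((\<Sum>m<n. real m ^ d) - real n ^ (d+1) / real (d+1))"
      unfolding gs by (simp add: algebra_simps)
    have t3: "\<bar>c * ((\<Sum>m<n. real m ^ d) - real n ^ (d+1) / real (d+1))\<bar> \<le> \<bar>c\<bar> * real n ^ d"
      unfolding abs_mult by (rule mult_left_mono[OF sum_pow_real]) simp
    have nn: "real n \<le> real n ^ d" using n1 d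
      using power_increasing[of 1 d "real n"] n1 d by simp
    have n0: "1 \<le> real n ^ d" using n1 by simp
    have "\<bar>F n - c / real (d+1) * real n ^ (d+1)\<bar> \<le> \<bar>K\<bar> * real n + (real n * A + C * real n ^ d) + \<bar>c\<bar> * real n ^ d"
    proof -
      let ?a = "F n - (\<Sum>m<n. g m)" and ?b = "\<Sum>m<n. h m"
        and ?c = "c * ((\<Sum>m<n. real m ^ d) - real n ^ (d+1) / real (d+1))"
      have t1: "\<bar>?a + ?b + ?c\<bar> \<le> \<bar>?a + ?b\<bar> + \<bar>?c\<bar>" by (rule abs_triangle_ineq)
      have t2: "\<bar>?a + ?b\<bar> \<le> \<bar>?a\<bar> + \<bar>?b\<bar>" by (rule abs_triangle_ineq)
      have t4: "K * real n \<le> \<bar>K\<bar> * real n" by (rule mult_right_mono) auto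
      show ?thesis unfolding e using t1 t2 t4 hFn sumh[of n] t3 by linarith
    qed
    also have "\<dots> \<le> \<bar>K\<bar> * real n ^ d + (real n ^ d * A + C * real n ^ d) + \<bar>c\<bar> * real n ^ d"
    proof -
      have "\<bar>K\<bar> * real n \<le> \<bar>K\<bar> * real n ^ d" by (rule mult_left_mono[OF nn]) simp
      moreover have "real n * A \<le> real n ^ d * A" by (rule mult_right_mono[OF nn A0])
      ultimately show ?thesis by linarith
    qed
    also have "\<dots> = B * real n ^ d" unfolding B_def by (simp add: algebra_simps)
    finally show ?thesis .
  qed
  show ?thesis
  proof (rule bigoI[where c = B])
    have "eventually (\<lambda>n::nat. n \<ge> 1) at_top" by (rule eventually_ge_at_top)
    then show "eventually (\<lambda>n. norm (F n - c / real (d+1) * real n ^ (d+1)) \<le> B * norm (real n powr real d)) at_top"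
      using hF
    proof eventually_elim
      case (elim n)
      then have "real n powr real d = real n ^ d" by (intro powr_realpow) simp
      then show ?case using main[OF elim(1,2)] by simp
    qed
  qed
qed



lemma csize_Wrec: assumes k1: "1 \<le> k" and kn: "k \<le> n"
  shows "csize (Wrec Gp k n) = (\<Sum>m\<in>{k-1..<n}. csize (Gp m)) + 4*(n-k) + 1"
  using kn
proof (induction n rule: dec_induct)
  case base
  have "{k-1..<k} = {k-1}" using k1 by auto
  then show ?case using k1 by (simp add: Wrec_base csize_append csize_shift)
next
  case (step n)
  have "csize (Wrec Gp k (Suc n)) = 1 + csize (Gp n) + 3 + csize (Wrec Gp k n)"
    using step.hyps by (simp add: Wrec_step csize_append csize_shift)
  moreover have "(\<Sum>m\<in>{k-1..<Suc n}. csize (Gp m)) = (\<Sum>m\<in>{k-1..<n}. csize (Gp m)) + csize (Gp n)"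
    using step.hyps by (intro sum.atLeastLessThan_Suc) simp
  ultimately show ?case using step by simp
qed

lemma depth_append: "depth (A @ B) = depth A + depth B" by (simp add: depth_def)
lemma depth_shift: "depth (shift p C) = depth C" by (simp add: depth_def)

lemma depth_Wrec: assumes k1: "1 \<le> k" and kn: "k \<le> n"
  shows "depth (Wrec Gp k n) = (\<Sum>m\<in>{k-1..<n}. depth (Gp m)) + 4*(n-k) + 1"
  using kn
proof (induction n rule: dec_induct)
  case base
  have "{k-1..<k} = {k-1}" using k1 by auto
  then show ?case using k1 by (simp add: Wrec_base depth_append depth_shift, simp add: depth_def CX_def)
next
  case (step n)
  have "depth (Wrec Gp k (Suc n)) = 1 + depth (Gp n) + 3 + depth (Wrec Gp k n)"
    using step.hyps by (simp add: Wrec_step depth_append depth_shift, simp add: depth_def CX_def SW_def)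
  moreover have "(\<Sum>m\<in>{k-1..<Suc n}. depth (Gp m)) = (\<Sum>m\<in>{k-1..<n}. depth (Gp m)) + depth (Gp n)"
    using step.hyps by (intro sum.atLeastLessThan_Suc) simp
  ultimately show ?case using step by simp
qed

lemma csize_Gk: "k0 < k \<Longrightarrow> k \<le> n \<Longrightarrow>
  csize (Gk k0 G0 k n) = (\<Sum>m\<in>{k-1..<n}. csize (Gk k0 G0 (k-1) m)) + 6*(n-k) + 2"
  unfolding Gk_gt mirror_PTC by (simp add: csize_append csize_Wrec csize_chl)

lemma depth_Gk: "k0 < k \<Longrightarrow> k \<le> n \<Longrightarrow>
  depth (Gk k0 G0 k n) = (\<Sum>m\<in>{k-1..<n}. depth (Gk k0 G0 (k-1) m)) + 6*(n-k) + 2"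
  unfolding Gk_gt mirror_PTC by (simp add: depth_append depth_Wrec, simp add: depth_def length_chl CX_def)

lemma hF_lemma:
  fixes F g :: "nat \<Rightarrow> real"
  assumes "\<forall>n\<ge>k. F n = (\<Sum>m\<in>{k-1..<n}. g m) + 6 * real (n-k) + 2" "k \<ge> 1"
  shows "\<exists>K. eventually (\<lambda>n. \<bar>F n - (\<Sum>m<n. g m)\<bar> \<le> K * real n) at_top"
proof -
  define Z where "Z = (\<Sum>m<k-1. \<bar>g m\<bar>)"
  have Z0: "Z \<ge> 0" unfolding Z_def by (simp add: sum_nonneg)
  have "eventually (\<lambda>n. n \<ge> k) at_top" by (rule eventually_ge_at_top)
  then have "eventually (\<lambda>n. \<bar>F n - (\<Sum>m<n. g m)\<bar> \<le> (8 + Z) * real n) at_top"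
  proof eventually_elim
    case (elim n)
    have split: "(\<Sum>m<n. g m) = (\<Sum>m<k-1. g m) + (\<Sum>m\<in>{k-1..<n}. g m)"
    proof -
      have "(\<Sum>m<n. g m) = (\<Sum>m\<in>{0..<n}. g m)" by (simp add: lessThan_atLeast0)
      also have "\<dots> = (\<Sum>m\<in>{0..<k-1}. g m) + (\<Sum>m\<in>{k-1..<n}. g m)"
        using elim by (intro sum.atLeastLessThan_concat[symmetric]) auto
      finally show ?thesis by (simp add: lessThan_atLeast0)
    qed
    have e: "F n - (\<Sum>m<n. g m) = 6 * real (n-k) + 2 - (\<Sum>m<k-1. g m)"
      using assms(1) elim split by simp
    have "\<bar>\<Sum>m<k-1. g m\<bar> \<le> Z" unfolding Z_def by (rule sum_abs)
    moreover have "real (n-k) \<le> real n" by simp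
    moreover have "1 \<le> real n" using elim assms(2) by simp
    moreover have "Z \<le> Z * real n" using Z0 \<open>1 \<le> real n\<close> by (simp add: mult_le_cancel_left1)
    ultimately show ?case unfolding e by (simp add: algebra_simps)
  qed
  then show ?thesis by blast
qed

lemma Gk_asymp:
  fixes c1 c2 :: real
  assumes k0: "k0 \<ge> 3"
    and hs: "(\<lambda>n. real (csize (G0 n)) - c1 * real n ^ (k0 - 1)) \<in> O(\<lambda>n. real n powr (real k0 - 2))"
    and hd: "(\<lambda>n. real (depth (G0 n)) - c2 * real n ^ (k0 - 2)) \<in> O(\<lambda>n. real n powr (real k0 - 3))"
    and k: "k0 \<le> k"
  shows "(\<lambda>n. real (csize (Gk k0 G0 k n)) - c1 * (fact (k0 - 1) / fact (k - 1)) * real n ^ (k - 1))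
            \<in> O(\<lambda>n. real n powr (real k - 2)) \<and>
         (\<lambda>n. real (depth (Gk k0 G0 k n)) - c2 * (fact (k0 - 2) / fact (k - 2)) * real n ^ (k - 2))
            \<in> O(\<lambda>n. real n powr (real k - 3))"
  using k
proof (induction k rule: dec_induct)
  case base
  then show ?case using hs hd by (simp add: Gk_le)
next
  case (step k)
  have k3: "k \<ge> 3" using step.hyps k0 by simp
  have gt: "k0 < Suc k" using step.hyps by simp
  define g where "g m = real (csize (Gk k0 G0 k m))" for m
  define c where "c = c1 * (fact (k0-1) / fact (k-1))"
  have hg: "(\<lambda>m. g m - c * real m ^ (k-1)) \<in> O(\<lambda>m. real m powr (real (k-1) - 1))"
  proof -
    have "real (k-1) - 1 = real k - 2" using k3 by simp
    then show ?thesis using step.IH unfolding g_def c_def by simp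
  qed
  have "\<exists>K. eventually (\<lambda>n. \<bar>real (csize (Gk k0 G0 (Suc k) n)) - (\<Sum>m<n. g m)\<bar> \<le> K * real n) at_top"
  proof (rule hF_lemma[where k = "Suc k"])
    show "\<forall>n\<ge>Suc k. real (csize (Gk k0 G0 (Suc k) n)) =
        (\<Sum>m\<in>{Suc k - 1..<n}. g m) + 6 * real (n - Suc k) + 2"
      using csize_Gk[OF gt] unfolding g_def by simp
  qed simp
  then obtain K where hF: "eventually (\<lambda>n. \<bar>real (csize (Gk k0 G0 (Suc k) n)) - (\<Sum>m<n. g m)\<bar> \<le> K * real n) at_top"
    by blast
  have r: "(\<lambda>n. real (csize (Gk k0 G0 (Suc k) n)) - c / real (k - 1 + 1) * real n ^ (k - 1 + 1))
      \<in> O(\<lambda>n. real n powr real (k-1))"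
    by (rule sum_asymp[OF _ hg hF]) (use k3 in simp)
  have eqc: "c / real (k - 1 + 1) = c1 * (fact (k0 - 1) / fact (Suc k - 1))"
  proof -
    have "fact k = real k * fact (k - 1)" using k3 by (simp add: fact_reduce)
    then show ?thesis unfolding c_def using k3 by (simp add: field_simps)
  qed
  have e1: "k - 1 + 1 = Suc k - 1" using k3 by simp
  have e2: "real (k-1) = real (Suc k) - 2" using k3 by simp
  have S: "(\<lambda>n. real (csize (Gk k0 G0 (Suc k) n)) - c1 * (fact (k0 - 1) / fact (Suc k - 1)) * real n ^ (Suc k - 1))
            \<in> O(\<lambda>n. real n powr (real (Suc k) - 2))"
    using r unfolding eqc unfolding e1 e2 .
  define g' where "g' m = real (depth (Gk k0 G0 k m))" for m
  define c' where "c' = c2 * (fact (k0-2) / fact (k-2))"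
  have hg': "(\<lambda>m. g' m - c' * real m ^ (k-2)) \<in> O(\<lambda>m. real m powr (real (k-2) - 1))"
  proof -
    have "real (k-2) - 1 = real k - 3" using k3 by simp
    then show ?thesis using step.IH unfolding g'_def c'_def by simp
  qed
  have "\<exists>K. eventually (\<lambda>n. \<bar>real (depth (Gk k0 G0 (Suc k) n)) - (\<Sum>m<n. g' m)\<bar> \<le> K * real n) at_top"
  proof (rule hF_lemma[where k = "Suc k"])
    show "\<forall>n\<ge>Suc k. real (depth (Gk k0 G0 (Suc k) n)) =
        (\<Sum>m\<in>{Suc k - 1..<n}. g' m) + 6 * real (n - Suc k) + 2"
      using depth_Gk[OF gt] unfolding g'_def by simp
  qed simp
  then obtain K' where hF': "eventually (\<lambda>n. \<bar>real (depth (Gk k0 G0 (Suc k) n)) - (\<Sum>m<n. g' m)\<bar> \<le> K' * real n) at_top"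
    by blast
  have r': "(\<lambda>n. real (depth (Gk k0 G0 (Suc k) n)) - c' / real (k - 2 + 1) * real n ^ (k - 2 + 1))
      \<in> O(\<lambda>n. real n powr real (k-2))"
    by (rule sum_asymp[OF _ hg' hF']) (use k3 in simp)
  have eqc': "c' / real (k - 2 + 1) = c2 * (fact (k0 - 2) / fact (Suc k - 2))"
  proof -
    have kk: "k - 1 - 1 = k - 2" by simp
    have "(fact (k-1)::real) = of_nat (k-1) * fact (k-1-1)" by (rule fact_reduce) (use k3 in simp)
    then have "fact (k - 1) = real (k - 1) * fact (k - 2)" unfolding kk by simp
    moreover have "Suc k - 2 = k - 1" "k - 2 + 1 = k - 1" using k3 by auto
    ultimately show ?thesis unfolding c'_def using k3 by (simp add: field_simps)
  qed
  have e1': "k - 2 + 1 = Suc k - 2" using k3 by simp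
  have e2': "real (k-2) = real (Suc k) - 3" using k3 by simp
  have D: "(\<lambda>n. real (depth (Gk k0 G0 (Suc k) n)) - c2 * (fact (k0 - 2) / fact (Suc k - 2)) * real n ^ (Suc k - 2))
            \<in> O(\<lambda>n. real n powr (real (Suc k) - 3))"
    using r' unfolding eqc' unfolding e1' e2' .
  show ?case using S D by blast
qed



definition cnt :: "nat \<Rightarrow> labelseq \<Rightarrow> nat" where
  "cnt n l = card {j\<in>{1..n}. 1 \<in> l j}"

lemma finite_vm: "valid_moment n M \<Longrightarrow> finite M"
proof -
  assume v: "valid_moment n M"
  have "M \<subseteq> {1..n} \<times> {1..n}"
  proof
    fix g assume "g \<in> M"
    then show "g \<in> {1..n} \<times> {1..n}" using vm_gate[OF v, of "fst g" "snd g"] by (cases g) auto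
  qed
  then show ?thesis by (rule finite_subset) simp
qed

lemma cnt_moment:
  assumes v: "valid_moment n M"
  shows "cnt n (apply_moment l M) \<le> 2 * cnt n l"
proof -
  define Ob where "Ob = {j\<in>{1..n}. 1 \<in> l j}"
  define X where "X = {g\<in>M. fst g \<in> Ob}"
  define N where "N = {j\<in>{1..n}. 1 \<in> apply_moment l M j}"
  have finO: "finite Ob" unfolding Ob_def by simp
  have finX: "finite X" unfolding X_def using finite_vm[OF v] by simp
  have sub: "N \<subseteq> Ob \<union> snd ` X"
  proof
    fix j assume "j \<in> N"
    then have j: "j \<in> {1..n}" "1 \<in> apply_moment l M j" unfolding N_def by auto
    show "j \<in> Ob \<union> snd ` X"
    proof (cases "\<exists>i. (i,j) \<in> M")
      case True
      then obtain i0 where i0: "(i0,j) \<in> M" by blast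
      have t: "(THE i. (i,j) \<in> M) = i0"
        using i0 valid_uniqc[OF v] unfolding uniqc_def by blast
      have am: "apply_moment l M j = symd (l i0) (l j)"
        unfolding apply_moment_def t using True by simp
      show ?thesis
      proof (cases "1 \<in> l j")
        case True then show ?thesis using j unfolding Ob_def by blast
      next
        case False
        then have "1 \<in> l i0" using j(2) unfolding am symd_def by blast
        moreover have "i0 \<in> {1..n}" using vm_gate[OF v i0] by auto
        ultimately have "(i0,j) \<in> X" unfolding X_def Ob_def using i0 by simp
        then show ?thesis by force
      qed
    next
      case False
      then have "apply_moment l M j = l j" unfolding apply_moment_def by simp
      then show ?thesis using j unfolding Ob_def by auto
    qed
  qed
  have injX: "inj_on fst X"
  proof (rule inj_onI)
    fix g h assume g: "g \<in> X" and h: "h \<in> X" and e: "fst g = fst h"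
    show "g = h"
    proof (rule ccontr)
      assume "g \<noteq> h"
      then have "{fst g, snd g} \<inter> {fst h, snd h} = {}"
        using vm_disj[OF v] g h unfolding X_def by blast
      then show False using e by auto
    qed
  qed
  have "card N \<le> card (Ob \<union> snd ` X)" by (rule card_mono) (use finO finX sub in auto)
  also have "\<dots> \<le> card Ob + card (snd ` X)" by (rule card_Un_le)
  also have "card (snd ` X) \<le> card X" by (rule card_image_le[OF finX])
  also have "card X = card (fst ` X)" using card_image[OF injX] by simp
  also have "card (fst ` X) \<le> card Ob" by (rule card_mono[OF finO]) (auto simp: X_def)
  finally show ?thesis unfolding cnt_def N_def Ob_def by simp
qed

lemma cnt_circuit: "valid_circuit n C \<Longrightarrow> cnt n (apply_circuit l C) \<le> 2 ^ length C * cnt n l"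
proof (induction C arbitrary: l)
  case Nil then show ?case by simp
next
  case (Cons M C)
  then have vM: "valid_moment n M" and vC: "valid_circuit n C" by (auto simp: valid_circuit_def)
  have "cnt n (apply_circuit l (M # C)) = cnt n (apply_circuit (apply_moment l M) C)"
    by (simp add: apply_circuit_Cons)
  also have "\<dots> \<le> 2 ^ length C * cnt n (apply_moment l M)" using Cons.IH[OF vC] .
  also have "\<dots> \<le> 2 ^ length C * (2 * cnt n l)" using cnt_moment[OF vM] by simp
  finally show ?case by simp
qed

lemma gen2_bound:
  assumes c: "clean_special_gen 2 n C"
  shows "n - 1 \<le> depth C * 2 ^ depth C"
proof -
  define D where "D = depth C"
  have n2: "n \<ge> 2" using c unfolding clean_special_gen_def by simp
  have vC: "valid_circuit n C" using clean_valid[OF c] .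
  define lab where "lab t = apply_circuit l0 (take t C)" for t
  define L where "L t = lab t ` {j\<in>{1..n}. 1 \<in> lab t j}" for t
  have c0: "cnt n l0 = 1"
  proof -
    have "{j\<in>{1..n}. 1 \<in> l0 j} = {1}" using n2 by auto
    then show ?thesis unfolding cnt_def by simp
  qed
  have cL: "card (L t) \<le> 2 ^ D" if "t \<le> D" for t
  proof -
    have "card (L t) \<le> card {j\<in>{1..n}. 1 \<in> lab t j}" unfolding L_def by (rule card_image_le) simp
    also have "\<dots> = cnt n (lab t)" unfolding cnt_def ..
    also have "\<dots> \<le> 2 ^ length (take t C) * cnt n l0"
      unfolding lab_def by (rule cnt_circuit[OF valid_take[OF vC]])
    also have "\<dots> \<le> 2 ^ D" using c0 that by (simp add: D_def depth_def)
    finally show ?thesis .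
  qed
  define U where "U = (\<Union>t\<in>{1..D}. L t)"
  have finU: "finite U" unfolding U_def L_def by simp
  have "card U \<le> (\<Sum>t\<in>{1..D}. card (L t))" unfolding U_def by (rule card_UN_le) simp
  also have "\<dots> \<le> (\<Sum>t\<in>{1..D}. 2 ^ D)" by (rule sum_mono) (use cL in auto)
  also have "\<dots> = D * 2 ^ D" by simp
  finally have cU: "card U \<le> D * 2 ^ D" .
  have VU: "(\<lambda>i. {1, i}) ` {2..n} \<subseteq> U"
  proof
    fix x assume "x \<in> (\<lambda>i. {1, i}) ` {2..n}"
    then obtain i where i: "i \<in> {2..n}" "x = {1, i}" by blast
    have "generates n C l0 (insert 1 {i})"
      by (rule clean_gen[OF c]) (use i in auto)
    then obtain t j where t: "t \<in> {1..D}" "j \<in> {1..n}" "{1, i} = lab t j"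
      unfolding generates_def D_def lab_def by blast
    have j1: "1 \<in> lab t j" using t(3) by (metis insertI1)
    have "x = lab t j" using t(3) i(2) by simp
    then have "x \<in> L t" unfolding L_def using t(2) j1 by blast
    then show "x \<in> U" unfolding U_def using t by blast
  qed
  have injV: "inj_on (\<lambda>i. {1::nat, i}) {2..n}"
    by (rule inj_onI) (auto simp: doubleton_eq_iff)
  have "n - 1 = card ((\<lambda>i. {1::nat, i}) ` {2..n})" using card_image[OF injV] by simp
  also have "\<dots> \<le> card U" by (rule card_mono[OF finU VU])
  finally show ?thesis using cU unfolding D_def by simp
qed

lemma k0_2_false:
  fixes c2 :: real
  assumes h0: "\<forall>n\<ge>2. clean_special_gen 2 n (G0 n)"
    and hd: "(\<lambda>n. real (depth (G0 n)) - c2 * real n ^ (2 - 2)) \<in> O(\<lambda>n. real n powr (real (2::nat) - 3))"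
  shows False
proof -
  obtain C where C: "C > 0" and ev: "eventually (\<lambda>n. norm (real (depth (G0 n)) - c2 * real n ^ (2 - 2))
      \<le> C * norm (real n powr (real (2::nat) - 3))) at_top"
    using landau_o.bigE[OF hd] by blast
  have "eventually (\<lambda>n::nat. n \<ge> 2) at_top" by (rule eventually_ge_at_top)
  then have ev2: "eventually (\<lambda>n. real (depth (G0 n)) \<le> c2 + C \<and> n \<ge> 2) at_top" using ev
  proof eventually_elim
    case (elim n)
    have pw: "real n powr (real (2::nat) - 3) = 1 / real n"
      using elim(1) by (simp add: powr_neg_one)
    have "1 / real n \<le> 1" using elim(1) by simp
    then have "C * (1 / real n) \<le> C * 1" using C by (intro mult_left_mono) auto
    then have "C * norm (real n powr (real (2::nat) - 3)) \<le> C" using pw by simp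
    then have "\<bar>real (depth (G0 n)) - c2\<bar> \<le> C" using elim(2) by simp
    then show ?case using elim(1) by linarith
  qed
  then obtain N where N: "\<And>n. n \<ge> N \<Longrightarrow> real (depth (G0 n)) \<le> c2 + C \<and> n \<ge> 2"
    unfolding eventually_at_top_linorder by blast
  define D0 where "D0 = nat \<lceil>c2 + C\<rceil>"
  define n where "n = max N (D0 * 2 ^ D0 + 2)"
  have nN: "n \<ge> N" unfolding n_def by simp
  have dn: "depth (G0 n) \<le> D0"
  proof -
    have "real (depth (G0 n)) \<le> c2 + C" using N[OF nN] by blast
    then show ?thesis unfolding D0_def by linarith
  qed
  have "n - 1 \<le> depth (G0 n) * 2 ^ depth (G0 n)"
    by (rule gen2_bound) (use h0 N[OF nN] in blast)
  also have "\<dots> \<le> D0 * 2 ^ D0" using dn by (intro mult_le_mono power_increasing) auto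
  finally show False unfolding n_def by simp
qed


theorem mainTheorem4:
  fixes k0 :: nat and G0 :: "nat \<Rightarrow> circuit"
  assumes "k0 \<ge> 2"
    and "\<forall>n\<ge>k0. clean_special_gen k0 n (G0 n)"
  shows "(\<forall>k\<ge>k0. \<forall>n\<ge>k. clean_special_gen k n (Gk k0 G0 k n)) \<and>
         (\<forall>c1 c2 :: real. c1 > 0 \<longrightarrow> c2 > 0 \<longrightarrow>
            (\<lambda>n. real (csize (G0 n)) - c1 * real n ^ (k0 - 1))
               \<in> O[at_top](\<lambda>n. real n powr (real k0 - 2)) \<longrightarrow>
            (\<lambda>n. real (depth (G0 n)) - c2 * real n ^ (k0 - 2))
               \<in> O[at_top](\<lambda>n. real n powr (real k0 - 3)) \<longrightarrow>
            (\<forall>k\<ge>k0.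
               (\<lambda>n. real (csize (Gk k0 G0 k n))
                     - c1 * (fact (k0 - 1) / fact (k - 1)) * real n ^ (k - 1))
                 \<in> O[at_top](\<lambda>n. real n powr (real k - 2)) \<and>
               (\<lambda>n. real (depth (Gk k0 G0 k n))
                     - c2 * (fact (k0 - 2) / fact (k - 2)) * real n ^ (k - 2))
                 \<in> O[at_top](\<lambda>n. real n powr (real k - 3))))"
proof -
  have P1: "\<forall>k\<ge>k0. \<forall>n\<ge>k. clean_special_gen k n (Gk k0 G0 k n)"
    using Gk_clean[OF assms(1) assms(2)] by blast
  have P2: "\<forall>c1 c2 :: real. c1 > 0 \<longrightarrow> c2 > 0 \<longrightarrow>
            (\<lambda>n. real (csize (G0 n)) - c1 * real n ^ (k0 - 1))
               \<in> O[at_top](\<lambda>n. real n powr (real k0 - 2)) \<longrightarrow>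
            (\<lambda>n. real (depth (G0 n)) - c2 * real n ^ (k0 - 2))
               \<in> O[at_top](\<lambda>n. real n powr (real k0 - 3)) \<longrightarrow>
            (\<forall>k\<ge>k0.
               (\<lambda>n. real (csize (Gk k0 G0 k n))
                     - c1 * (fact (k0 - 1) / fact (k - 1)) * real n ^ (k - 1))
                 \<in> O[at_top](\<lambda>n. real n powr (real k - 2)) \<and>
               (\<lambda>n. real (depth (Gk k0 G0 k n))
                     - c2 * (fact (k0 - 2) / fact (k - 2)) * real n ^ (k - 2))
                 \<in> O[at_top](\<lambda>n. real n powr (real k - 3)))"
  proof (intro allI impI)
    fix c1 c2 :: real and k :: nat
    assume c1: "c1 > 0" and c2: "c2 > 0"
      and hs: "(\<lambda>n. real (csize (G0 n)) - c1 * real n ^ (k0 - 1))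
               \<in> O[at_top](\<lambda>n. real n powr (real k0 - 2))"
      and hd: "(\<lambda>n. real (depth (G0 n)) - c2 * real n ^ (k0 - 2))
               \<in> O[at_top](\<lambda>n. real n powr (real k0 - 3))"
      and k: "k0 \<le> k"
    show "(\<lambda>n. real (csize (Gk k0 G0 k n))
                     - c1 * (fact (k0 - 1) / fact (k - 1)) * real n ^ (k - 1))
                 \<in> O[at_top](\<lambda>n. real n powr (real k - 2)) \<and>
               (\<lambda>n. real (depth (Gk k0 G0 k n))
                     - c2 * (fact (k0 - 2) / fact (k - 2)) * real n ^ (k - 2))
                 \<in> O[at_top](\<lambda>n. real n powr (real k - 3))"
    proof (cases "k0 = 2")
      case True
      have h0: "\<forall>n\<ge>2. clean_special_gen 2 n (G0 n)" using assms(2) unfolding True .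
      have hd2: "(\<lambda>n. real (depth (G0 n)) - c2 * real n ^ (2 - 2)) \<in> O(\<lambda>n. real n powr (real (2::nat) - 3))"
        using hd unfolding True .
      have False by (rule k0_2_false[OF h0 hd2])
      then show ?thesis ..
    next
      case False
      then have "k0 \<ge> 3" using assms(1) by simp
      then show ?thesis using Gk_asymp[OF _ hs hd k] by blast
    qed
  qed
  show ?thesis using P1 P2 by blast
qed

end
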